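(* Let $p>6$ and assume $h$ satisfies $(h_1)$. Let $u\in H^{s,2}$ with $u^+\neq0$, $u^-\neq0$, $\langle J_{s,2}'(u),u^+\rangle\le0$ and $\langle J_{s,2}'(u),u^-\rangle\le0$. Then the unique pair $(r_u,t_u)\in(0,\infty)^2$ with $r_uu^++t_uu^-\in\mathcal{M}_{s,2}$ satisfies $r_u,t_u\in(0,1]$.
   Context: Let $d\ge 1$ and $s\in(0,1)$. $\mathbb{Z}^d$ is the integer lattice graph (vertices $\mathbb{Z}^d$, edges between $x,y$ with $\sum_i|x_i-y_i|=1$), with graph distance $|x-y|=\sum_{i=1}^d|x_i-y_i|$ and counting measure $\mu$; $\int_{\mathbb{Z}^d}f\,d\mu:=\sum_{x\in\mathbb{Z}^d}f(x)$. The weight $w_s(x,y)$, defined for $x\neq y$, is symmetric, positive, and satisfies $c_{s,d}|x-y|^{-d-2s}\le w_s(x,y)\le C_{s,d}|x-y|^{-d-2s}$ for some constants $0<c_{s,d}\le C_{s,d}$. For $u,v:\mathbb{Z}^d\to\mathbb{R}$ set $\nabla^s u\nabla^s v(x)=\frac12\sum_{y\neq x}w_s(x,y)(u(x)-u(y))(v(x)-v(y))$, $|\nabla^s u|^2(x)=\nabla^s u\nabla^s u(x)$, $\|\nabla^s u\|_2^2:=\int_{\mathbb{Z}^d}|\nabla^s u|^2d\mu$, and $(-\Delta)^s u(x)=\sum_{y\neq x}w_s(x,y)(u(x)-u(y))$; $\|u\|_q$ denotes the $\ell^q(\mathbb{Z}^d)$ norm. Fix constants $a,b>0$ and $p>2$.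 The potential $h:\mathbb{Z}^d\to\mathbb{R}$ may satisfy: $(h_1)$ there is $h_0>0$ with $h(x)\ge h_0$ for all $x$; $(h_2)$ there is $x_0\in\mathbb{Z}^d$ with $h(x)\to\infty$ as $|x-x_0|\to\infty$. $W^{s,2}(\mathbb{Z}^d)$ is the completion of finitely supported functions under $\|u\|_{W^{s,2}}^2=\int(|\nabla^s u|^2+u^2)d\mu$, and $H^{s,2}=\{u\in W^{s,2}:\int h u^2d\mu<\infty\}$ is the Hilbert space with inner product $\langle u,v\rangle_{H^{s,2}}=\int(a\nabla^s u\nabla^s v+huv)d\mu$ and norm $\|u\|_{H^{s,2}}$. Equation (E) is $\left(a+b\int_{\mathbb{Z}^d}|\nabla^s u|^2d\mu\right)(-\Delta)^s u+h(x)u=|u|^{p-2}u\log u^2$ on $\mathbb{Z}^d$ (with $|t|^{p-2}t\log t^2:=0$ at $t=0$). The energy is $J_{s,2}(u)=\frac12\|u\|_{H^{s,2}}^2+\frac b4\|\nabla^s u\|_2^4+\frac{2}{p^2}\int|u|^pd\mu-\frac1p\int|u|^p\log u^2d\mu$, a $C^1$ functional on $H^{s,2}$ with $\langle J_{s,2}'(u),\phi\rangle=\int(a\nabla^s u\nabla^s\phi+hu\phi)d\mu+b\|\nabla^s u\|_2^2\int\nabla^s u\nabla^s\phi\,d\mu-\int|u|^{p-2}u\phi\log u^2d\mu$. A weak solution is a critical point of $J_{s,2}$; nontrivial means $\neq0$. $u^+=\max\{u,0\}$, $u^-=\min\{u,0\}$. Nehari manifold: $\mathcal{N}_{s,2}=\{v\in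 H^{s,2}\setminus\{0\}:\langle J_{s,2}'(v),v\rangle=0\}$. Sign-changing Nehari set: $\mathcal{M}_{s,2}=\{v\in H^{s,2}: v^\pm\neq0,\ \langle J_{s,2}'(v),v^+\rangle=\langle J_{s,2}'(v),v^-\rangle=0\}$. A ground state solution is a nontrivial weak solution $u$ with $J_{s,2}(u)=\inf_{\mathcal{N}_{s,2}}J_{s,2}$; a sign-changing solution is a weak solution $u$ with $u^\pm\not\equiv0$; a ground state sign-changing solution is a sign-changing solution $u$ with $J_{s,2}(u)=\inf_{\mathcal{M}_{s,2}}J_{s,2}$. For $u\in H^{s,2}$, $K(u)=\sum_{x}\sum_{y\neq x}w_s(x,y)[u^+(y)u^-(x)+u^-(y)u^+(x)]$. *)

theory Defs
  imports "HOL-Analysis.Analysis"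
begin

text \<open>Lattice points of Z^d are functions from a finite index type 'd to int;
  the dimension is d = CARD('d).\<close>

definition ldist :: "('d::finite \<Rightarrow> int) \<Rightarrow> ('d \<Rightarrow> int) \<Rightarrow> real" where
  "ldist x y = (\<Sum>i\<in>UNIV. real_of_int \<bar>x i - y i\<bar>)"

definition admissible_weight ::
  "real \<Rightarrow> (('d::finite \<Rightarrow> int) \<Rightarrow> ('d \<Rightarrow> int) \<Rightarrow> real) \<Rightarrow> bool" where
  "admissible_weight s w \<longleftrightarrow>
     (\<forall>x y. x \<noteq> y \<longrightarrow> w x y = w y x \<and> 0 < w x y) \<and>
     (\<exists>c C. 0 < c \<and> c \<le> C \<and>
        (\<forall>x y. x \<noteq> y \<longrightarrow>
           c * ldist x y powr (- (real CARD('d) + 2 * s)) \<le> w x y \<and>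
           w x y \<le> C * ldist x y powr (- (real CARD('d) + 2 * s))))"

definition grad_prod ::
  "(('d::finite \<Rightarrow> int) \<Rightarrow> ('d \<Rightarrow> int) \<Rightarrow> real) \<Rightarrow> (('d \<Rightarrow> int) \<Rightarrow> real)
     \<Rightarrow> (('d \<Rightarrow> int) \<Rightarrow> real) \<Rightarrow> ('d \<Rightarrow> int) \<Rightarrow> real" where
  "grad_prod w u v x = (1/2) * (\<Sum>\<^sub>\<infinity>y\<in>UNIV - {x}. w x y * (u x - u y) * (v x - v y))"

definition grad_norm_sq ::
  "(('d::finite \<Rightarrow> int) \<Rightarrow> ('d \<Rightarrow> int) \<Rightarrow> real) \<Rightarrow> (('d \<Rightarrow> int) \<Rightarrow> real) \<Rightarrow> real" where
  "grad_norm_sq w u = (\<Sum>\<^sub>\<infinity>x. grad_prod w u u x)"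

definition W_norm_sq ::
  "(('d::finite \<Rightarrow> int) \<Rightarrow> ('d \<Rightarrow> int) \<Rightarrow> real) \<Rightarrow> (('d \<Rightarrow> int) \<Rightarrow> real) \<Rightarrow> real" where
  "W_norm_sq w u = (\<Sum>\<^sub>\<infinity>x. grad_prod w u u x + (u x)\<^sup>2)"

text \<open>W^{s,2}: functions of finite W-norm that are W-norm limits of finitely supported
  functions (the completion, realised as a space of functions on Z^d).\<close>
definition W_space ::
  "(('d::finite \<Rightarrow> int) \<Rightarrow> ('d \<Rightarrow> int) \<Rightarrow> real) \<Rightarrow> (('d \<Rightarrow> int) \<Rightarrow> real) set" where
  "W_space w = {u. (\<lambda>x. grad_prod w u u x) summable_on UNIV \<and>
                   (\<lambda>x. (u x)\<^sup>2) summable_on UNIV \<and>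
                   (\<exists>\<phi>::nat \<Rightarrow> ('d \<Rightarrow> int) \<Rightarrow> real.
                      (\<forall>n. finite {x. \<phi> n x \<noteq> 0}) \<and>
                      (\<lambda>n. W_norm_sq w (\<lambda>x. u x - \<phi> n x)) \<longlonglongrightarrow> 0)}"

definition H_space ::
  "(('d::finite \<Rightarrow> int) \<Rightarrow> ('d \<Rightarrow> int) \<Rightarrow> real) \<Rightarrow> (('d \<Rightarrow> int) \<Rightarrow> real)
     \<Rightarrow> (('d \<Rightarrow> int) \<Rightarrow> real) set" where
  "H_space w h = {u \<in> W_space w. (\<lambda>x. h x * (u x)\<^sup>2) summable_on UNIV}"

definition logterm :: "real \<Rightarrow> real \<Rightarrow> real" where
  "logterm p t = (if t = 0 then 0 else \<bar>t\<bar> powr (p - 2) * t * ln (t\<^sup>2))"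

definition pos_part :: "('a \<Rightarrow> real) \<Rightarrow> 'a \<Rightarrow> real" where
  "pos_part u = (\<lambda>x. max (u x) 0)"

definition neg_part :: "('a \<Rightarrow> real) \<Rightarrow> 'a \<Rightarrow> real" where
  "neg_part u = (\<lambda>x. min (u x) 0)"

definition Jder ::
  "real \<Rightarrow> real \<Rightarrow> real \<Rightarrow> (('d::finite \<Rightarrow> int) \<Rightarrow> ('d \<Rightarrow> int) \<Rightarrow> real)
     \<Rightarrow> (('d \<Rightarrow> int) \<Rightarrow> real) \<Rightarrow> (('d \<Rightarrow> int) \<Rightarrow> real) \<Rightarrow> (('d \<Rightarrow> int) \<Rightarrow> real) \<Rightarrow> real" where
  "Jder a b p w h u \<phi> =
     (\<Sum>\<^sub>\<infinity>x. a * grad_prod w u \<phi> x + h x * u x * \<phi> x)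
     + b * grad_norm_sq w u * (\<Sum>\<^sub>\<infinity>x. grad_prod w u \<phi> x)
     - (\<Sum>\<^sub>\<infinity>x. logterm p (u x) * \<phi> x)"

definition M_set ::
  "real \<Rightarrow> real \<Rightarrow> real \<Rightarrow> (('d::finite \<Rightarrow> int) \<Rightarrow> ('d \<Rightarrow> int) \<Rightarrow> real)
     \<Rightarrow> (('d \<Rightarrow> int) \<Rightarrow> real) \<Rightarrow> (('d \<Rightarrow> int) \<Rightarrow> real) set" where
  "M_set a b p w h = {v \<in> H_space w h. pos_part v \<noteq> (\<lambda>_. 0) \<and> neg_part v \<noteq> (\<lambda>_. 0) \<and>
       Jder a b p w h v (pos_part v) = 0 \<and> Jder a b p w h v (neg_part v) = 0}"

end

theory Submission
  imports Defs
begin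


lemma phi_summable_int:
  assumes "1 < \<beta>"
  shows "(\<lambda>k::int. (1 + real_of_int \<bar>k\<bar>) powr (-\<beta>)) summable_on UNIV"
proof -
  define \<phi> where "\<phi> = (\<lambda>k::int. (1 + real_of_int \<bar>k\<bar>) powr (-\<beta>))"
  have "summable (\<lambda>n. real n powr (-\<beta>))" using assms by (subst summable_real_powr_iff) auto
  hence "summable (\<lambda>n. real (Suc n) powr (-\<beta>))" by (subst summable_Suc_iff)
  hence s1: "summable (\<lambda>n. (1 + real n) powr (-\<beta>))" by simp
  hence s1': "(\<lambda>n. (1 + real n) powr (-\<beta>)) summable_on UNIV"
    by (intro summable_nonneg_imp_summable_on) auto
  have A: "\<phi> summable_on (range int)"
    by (subst summable_on_reindex) (use s1' in \<open>auto simp: \<phi>_def o_def\<close>)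
  have "(\<lambda>n. (2 + real n) powr (-\<beta>)) summable_on UNIV"
    by (rule summable_on_comparison_test[OF s1']) (use assms in \<open>auto intro!: powr_mono2'\<close>)
  hence B: "\<phi> summable_on (range (\<lambda>n. - int n - 1))"
    by (subst summable_on_reindex) (auto simp: inj_on_def \<phi>_def o_def add.commute)
  have U: "UNIV = range int \<union> range (\<lambda>n. - int n - 1)"
  proof (safe)
    fix k :: int assume k: "k \<notin> range (\<lambda>n. - int n - 1)"
    show "k \<in> range int"
    proof (cases "k \<ge> 0")
      case True thus ?thesis by (metis nat_0_le rangeI)
    next
      case False
      hence "k = - int (nat (-k-1)) - 1" by simp
      with k show ?thesis by blast
    qed
  qed auto
  show ?thesis unfolding \<phi>_def[symmetric] by (subst U) (rule summable_on_union[OF A B])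
qed


definition Zf :: "real \<Rightarrow> ('d::finite \<Rightarrow> int) \<Rightarrow> real" where
  "Zf \<beta> z = (\<Prod>i\<in>UNIV. (1 + real_of_int \<bar>z i\<bar>) powr (-\<beta>))"

lemma Zf_nonneg: "0 \<le> Zf \<beta> z" unfolding Zf_def by (intro prod_nonneg) auto

lemma Zf_summable:
  assumes "1 < \<beta>"
  shows "(Zf \<beta> :: ('d::finite \<Rightarrow> int) \<Rightarrow> real) summable_on UNIV"
proof (rule ccontr)
  define \<phi> where "\<phi> = (\<lambda>k::int. (1 + real_of_int \<bar>k\<bar>) powr (-\<beta>))"
  have s: "\<phi> summable_on UNIV" unfolding \<phi>_def by (rule phi_summable_int[OF assms])
  have as: "(\<lambda>x. norm (\<phi> x)) summable_on UNIV"
    using s by (simp add: \<phi>_def)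
  have pos: "infsum \<phi> UNIV \<ge> 1"
  proof -
    have "sum \<phi> {0} \<le> infsum \<phi> UNIV"
      by (rule finite_sum_le_infsum[OF s]) (auto simp: \<phi>_def)
    thus ?thesis by (simp add: \<phi>_def)
  qed
  have eq: "infsum (\<lambda>g. \<Prod>x\<in>(UNIV::'d set). (\<lambda>_. \<phi>) x (g x)) (PiE UNIV (\<lambda>_. UNIV))
      = (\<Prod>x\<in>(UNIV::'d set). infsum ((\<lambda>_. \<phi>) x) ((\<lambda>_. UNIV) x))"
    by (rule infsum_prod_PiE_abs) (use as in auto)
  hence "infsum (Zf \<beta> :: ('d \<Rightarrow> int) \<Rightarrow> real) UNIV = infsum \<phi> UNIV ^ CARD('d)"
    by (simp add: Zf_def[abs_def] \<phi>_def)
  moreover have "infsum \<phi> UNIV ^ CARD('d) > 0" using pos by simp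
  moreover assume "\<not> (Zf \<beta> :: ('d \<Rightarrow> int) \<Rightarrow> real) summable_on UNIV"
  hence "infsum (Zf \<beta> :: ('d \<Rightarrow> int) \<Rightarrow> real) UNIV = 0" by (simp add: infsum_not_exists)
  ultimately show False using pos by simp
qed

lemma ldist_ge1:
  fixes x y :: "'d::finite \<Rightarrow> int"
  assumes "x \<noteq> y" shows "1 \<le> ldist x y"
proof -
  obtain i where i: "x i \<noteq> y i" using assms by auto
  have "1 \<le> real_of_int \<bar>x i - y i\<bar>" using i by simp
  also have "\<dots> \<le> ldist x y" unfolding ldist_def
    by (rule member_le_sum) auto
  finally show ?thesis .
qed

lemma ldist_comp:
  fixes x y :: "'d::finite \<Rightarrow> int"
  assumes "x \<noteq> y" shows "1 + real_of_int \<bar>(y - x) i\<bar> \<le> 2 * ldist x y"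
proof -
  have "real_of_int \<bar>(y - x) i\<bar> = real_of_int \<bar>x i - y i\<bar>" by simp
  also have "\<dots> \<le> ldist x y" unfolding ldist_def
    by (rule member_le_sum) auto
  finally show ?thesis using ldist_ge1[OF assms] by simp
qed

lemma ldist_Zf:
  fixes x y :: "'d::finite \<Rightarrow> int"
  assumes "x \<noteq> y" "0 < s"
  shows "ldist x y powr (- (real CARD('d) + 2 * s))
          \<le> 2 powr (real CARD('d) + 2 * s) * Zf (1 + 2 * s / real CARD('d)) (y - x)"
proof -
  define d where "d = real CARD('d)"
  define \<beta> where "\<beta> = 1 + 2 * s / d"
  have d: "d \<ge> 1" unfolding d_def by (simp add: Suc_le_eq)
  have bd: "\<beta> * d = d + 2 * s" unfolding \<beta>_def using d by (simp add: field_simps)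
  have L: "ldist x y \<ge> 1" using ldist_ge1[OF assms(1)] .
  have b0: "\<beta> \<ge> 0" unfolding \<beta>_def using d assms by simp
  have "(2 * ldist x y) powr (-\<beta>) \<le> (1 + real_of_int \<bar>(y - x) i\<bar>) powr (-\<beta>)" for i
    by (rule powr_mono2') (use b0 ldist_comp[OF assms(1)] in auto)
  hence "(\<Prod>i\<in>(UNIV::'d set). (2 * ldist x y) powr (-\<beta>)) \<le> Zf \<beta> (y - x)"
    unfolding Zf_def by (intro prod_mono) auto
  moreover have "(\<Prod>i\<in>(UNIV::'d set). (2 * ldist x y) powr (-\<beta>)) = (2 * ldist x y) powr (-\<beta> * d)"
  proof -
    have "(\<Prod>i\<in>(UNIV::'d set). (2 * ldist x y) powr (-\<beta>)) = ((2 * ldist x y) powr (-\<beta>)) ^ CARD('d)" by simp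
    also have "\<dots> = ((2 * ldist x y) powr (-\<beta>)) powr d" unfolding d_def
      by (rule powr_realpow[symmetric]) (use L in simp)
    also have "\<dots> = (2 * ldist x y) powr (-\<beta> * d)" by (simp add: powr_powr)
    finally show ?thesis .
  qed
  moreover have "(2 * ldist x y) powr (-\<beta> * d) = 2 powr (-(d + 2 * s)) * ldist x y powr (-(d+2 * s))"
    using L bd by (simp add: powr_mult)
  ultimately have "2 powr (-(d + 2 * s)) * ldist x y powr (-(d+2 * s)) \<le> Zf \<beta> (y - x)" by simp
  hence "2 powr (d + 2 * s) * (2 powr (-(d + 2 * s)) * ldist x y powr (-(d+2 * s))) \<le> 2 powr (d + 2 * s) * Zf \<beta> (y - x)"
    by (intro mult_left_mono) auto
  moreover have "2 powr (d + 2 * s) * (2 powr (-(d + 2 * s)) * ldist x y powr (-(d+2 * s))) = ldist x y powr (-(d+2 * s))"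
    by (simp add: mult.assoc[symmetric] powr_add[symmetric])
  ultimately show ?thesis unfolding d_def \<beta>_def by linarith
qed


lemma weight_est:
  fixes w :: "('d::finite \<Rightarrow> int) \<Rightarrow> ('d \<Rightarrow> int) \<Rightarrow> real"
  assumes "admissible_weight s w" "0 < s"
  shows "\<exists>M C. 0 \<le> M \<and> 0 \<le> C \<and> (\<forall>x y. x \<noteq> y \<longrightarrow> 0 < w x y \<and> w x y = w y x \<and> w x y \<le> C) \<and>
     (\<forall>x. (\<lambda>y. w x y) summable_on (UNIV - {x}) \<and> infsum (\<lambda>y. w x y) (UNIV - {x}) \<le> M)"
proof -
  define \<alpha> where "\<alpha> = real CARD('d) + 2 * s"
  define \<beta> where "\<beta> = 1 + 2 * s / real CARD('d)"
  define K where "K = 2 powr \<alpha>"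
  have \<alpha>0: "0 \<le> \<alpha>" unfolding \<alpha>_def using assms by simp
  have \<beta>1: "1 < \<beta>" unfolding \<beta>_def using assms by simp
  have ex: "\<exists>c C. 0 < c \<and> c \<le> C \<and> (\<forall>x y. x \<noteq> y \<longrightarrow>
           c * ldist x y powr (- (real CARD('d) + 2 * s)) \<le> w x y \<and>
           w x y \<le> C * ldist x y powr (- (real CARD('d) + 2 * s)))"
    using assms(1) unfolding admissible_weight_def by (rule conjunct2)
  have ws0: "\<forall>x y. x \<noteq> y \<longrightarrow> w x y = w y x \<and> 0 < w x y"
    using assms(1) unfolding admissible_weight_def by (rule conjunct1)
  have ws: "\<And>x y. x \<noteq> y \<Longrightarrow> w x y = w y x \<and> 0 < w x y" using ws0 by blast
  obtain c C where cC: "0 < c" "c \<le> C" and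
    wb0: "\<forall>x y. x \<noteq> y \<longrightarrow> c * ldist x y powr (- (real CARD('d) + 2 * s)) \<le> w x y \<and>
           w x y \<le> C * ldist x y powr (- (real CARD('d) + 2 * s))"
    using ex by blast
  have wb: "\<And>x y. x \<noteq> y \<Longrightarrow> w x y \<le> C * ldist x y powr (- (real CARD('d) + 2 * s))"
    using wb0 by blast
  have wpos: "\<And>x y. x \<noteq> y \<Longrightarrow> 0 \<le> w x y" using ws less_imp_le by blast
  have C0: "0 \<le> C" using cC by simp
  have ZS: "(Zf \<beta> :: ('d \<Rightarrow> int) \<Rightarrow> real) summable_on UNIV" by (rule Zf_summable[OF \<beta>1])
  define M where "M = C * K * infsum (Zf \<beta> :: ('d \<Rightarrow> int) \<Rightarrow> real) UNIV"
  have M0: "0 \<le> M" unfolding M_def K_def using C0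
    by (intro mult_nonneg_nonneg infsum_nonneg) (auto simp: Zf_nonneg)
  have wC: "w x y \<le> C" if "x \<noteq> y" for x y
  proof -
    have "1 \<le> ldist x y powr \<alpha>" using ldist_ge1[OF that] \<alpha>0 by (rule ge_one_powr_ge_zero)
    hence "ldist x y powr (-\<alpha>) \<le> 1" by (simp add: powr_minus inverse_le_1_iff)
    hence "C * ldist x y powr (-\<alpha>) \<le> C" using C0 by (simp add: mult_left_le)
    thus ?thesis using wb[OF that] unfolding \<alpha>_def by simp
  qed
  have wZ: "w x y \<le> C * K * Zf \<beta> (y - x)" if "x \<noteq> y" for x y
  proof -
    have "w x y \<le> C * ldist x y powr (- (real CARD('d) + 2 * s))" by (rule wb[OF that])
    also have "\<dots> \<le> C * (K * Zf \<beta> (y - x))"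
      using ldist_Zf[OF that assms(2)] C0 unfolding K_def \<alpha>_def \<beta>_def by (intro mult_left_mono) auto
    finally show ?thesis by simp
  qed
  have trans: "(\<lambda>y. Zf \<beta> (y - x)) summable_on UNIV \<and> infsum (\<lambda>y. Zf \<beta> (y - x)) UNIV = infsum (Zf \<beta> :: ('d \<Rightarrow> int) \<Rightarrow> real) UNIV"
    for x :: "'d \<Rightarrow> int"
  proof -
    have inj: "inj_on (\<lambda>y. y - x) UNIV" by (auto simp: inj_on_def fun_eq_iff)
    have im: "(\<lambda>y. y - x) ` UNIV = UNIV"
      by (auto simp: image_iff fun_eq_iff intro!: exI[of _ "\<lambda>i. _ i + x i"])
    show ?thesis
      using summable_on_reindex[OF inj, of "Zf \<beta>"] infsum_reindex[OF inj, of "Zf \<beta>"] ZS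
      by (simp add: im o_def)
  qed
  have "(\<lambda>y. w x y) summable_on (UNIV - {x}) \<and> infsum (\<lambda>y. w x y) (UNIV - {x}) \<le> M" for x
  proof -
    have g: "(\<lambda>y. C * K * Zf \<beta> (y - x)) summable_on UNIV"
      using trans[of x] by (intro summable_on_cmult_right) auto
    hence g': "(\<lambda>y. C * K * Zf \<beta> (y - x)) summable_on (UNIV - {x})"
      by (rule summable_on_subset) auto
    have s: "(\<lambda>y. w x y) summable_on (UNIV - {x})"
      by (rule summable_on_comparison_test[OF g']) (use wZ wpos in auto)
    have "infsum (\<lambda>y. w x y) (UNIV - {x}) \<le> infsum (\<lambda>y. C * K * Zf \<beta> (y - x)) UNIV"
      by (rule infsum_mono_neutral[OF s g]) (use wZ C0 in \<open>auto simp: K_def Zf_nonneg\<close>)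
    also have "\<dots> = M"
      unfolding M_def using trans[of x] by (subst infsum_cmult_right) auto
    finally show ?thesis using s by simp
  qed
  thus ?thesis using M0 C0 wC ws by blast
qed


lemma absprod_le: "\<bar>a * b\<bar> \<le> a\<^sup>2 + (b::real)\<^sup>2"
proof -
  have "0 \<le> (\<bar>a\<bar> - \<bar>b\<bar>)\<^sup>2" by simp
  hence "2 * \<bar>a\<bar> * \<bar>b\<bar> \<le> a\<^sup>2 + b\<^sup>2" by (simp add: power2_eq_square algebra_simps)
  moreover have "\<bar>a * b\<bar> = \<bar>a\<bar> * \<bar>b\<bar>" by (simp add: abs_mult)
  moreover have "0 \<le> \<bar>a\<bar> * \<bar>b\<bar>" by simp
  ultimately show ?thesis by linarith
qed

lemma sqdiff_le: "(a - b)\<^sup>2 \<le> 2 * a\<^sup>2 + 2 * (b::real)\<^sup>2"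
proof -
  have "0 \<le> (a + b)\<^sup>2" by simp
  thus ?thesis by (simp add: power2_eq_square algebra_simps)
qed

definition l2 :: "('a \<Rightarrow> real) \<Rightarrow> bool" where
  "l2 f \<longleftrightarrow> (\<lambda>x. (f x)\<^sup>2) summable_on UNIV"

lemma l2_le: "l2 f \<Longrightarrow> (f x)\<^sup>2 \<le> infsum (\<lambda>x. (f x)\<^sup>2) UNIV"
  unfolding l2_def using finite_sum_le_infsum[of "\<lambda>x. (f x)\<^sup>2" UNIV "{x}"] by auto

locale WG =
  fixes w :: "('d::finite \<Rightarrow> int) \<Rightarrow> ('d \<Rightarrow> int) \<Rightarrow> real" and M C :: real
  assumes M0: "0 \<le> M" and C0: "0 \<le> C"
    and wpos: "\<And>x y. x \<noteq> y \<Longrightarrow> 0 < w x y"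
    and wsym: "\<And>x y. x \<noteq> y \<Longrightarrow> w x y = w y x"
    and wC: "\<And>x y. x \<noteq> y \<Longrightarrow> w x y \<le> C"
    and wsum: "\<And>x. (\<lambda>y. w x y) summable_on (UNIV - {x})"
    and wM: "\<And>x. infsum (\<lambda>y. w x y) (UNIV - {x}) \<le> M"
begin

lemma w0: "x \<noteq> y \<Longrightarrow> 0 \<le> w x y" using wpos[of x y] by simp

lemma inner_summable:
  assumes f: "l2 f" and k: "l2 k"
  shows "(\<lambda>y. w x y * (f x - f y) * (k x - k y)) summable_on (UNIV - {x})"
proof -
  define G where "G = (\<lambda>y. 2 * ((f x)\<^sup>2 + (k x)\<^sup>2) * w x y + 2 * C * ((f y)\<^sup>2 + (k y)\<^sup>2))"
  have s2: "(\<lambda>y. (f y)\<^sup>2 + (k y)\<^sup>2) summable_on (UNIV - {x})"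
    by (rule summable_on_subset[OF summable_on_add]) (use f k in \<open>auto simp: l2_def\<close>)
  have G: "G summable_on (UNIV - {x})" unfolding G_def
    by (intro summable_on_add summable_on_cmult_right wsum s2)
  have b: "\<bar>w x y * (f x - f y) * (k x - k y)\<bar> \<le> G y" if "y \<in> UNIV - {x}" for y
  proof -
    have xy: "x \<noteq> y" using that by auto
    have "\<bar>(f x - f y) * (k x - k y)\<bar> \<le> (f x - f y)\<^sup>2 + (k x - k y)\<^sup>2" by (rule absprod_le)
    also have "\<dots> \<le> 2 * ((f x)\<^sup>2 + (k x)\<^sup>2) + 2 * ((f y)\<^sup>2 + (k y)\<^sup>2)"
      using sqdiff_le[of "f x" "f y"] sqdiff_le[of "k x" "k y"] by simp
    finally have 1: "\<bar>(f x - f y) * (k x - k y)\<bar> \<le> 2 * ((f x)\<^sup>2 + (k x)\<^sup>2) + 2 * ((f y)\<^sup>2 + (k y)\<^sup>2)" .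
    have "\<bar>w x y * (f x - f y) * (k x - k y)\<bar> = w x y * \<bar>(f x - f y) * (k x - k y)\<bar>"
      using w0[OF xy] by (simp add: abs_mult)
    also have "\<dots> \<le> w x y * (2 * ((f x)\<^sup>2 + (k x)\<^sup>2) + 2 * ((f y)\<^sup>2 + (k y)\<^sup>2))"
      by (rule mult_left_mono[OF 1 w0[OF xy]])
    also have "\<dots> = 2 * ((f x)\<^sup>2 + (k x)\<^sup>2) * w x y + w x y * (2 * ((f y)\<^sup>2 + (k y)\<^sup>2))"
      by (simp add: algebra_simps)
    also have "\<dots> \<le> 2 * ((f x)\<^sup>2 + (k x)\<^sup>2) * w x y + C * (2 * ((f y)\<^sup>2 + (k y)\<^sup>2))"
      by (intro add_left_mono mult_right_mono wC xy) auto
    finally show ?thesis unfolding G_def by (simp add: algebra_simps)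
  qed
  have "(\<lambda>y. \<bar>w x y * (f x - f y) * (k x - k y)\<bar>) summable_on (UNIV - {x})"
    by (rule summable_on_comparison_test[OF G]) (use b in auto)
  thus ?thesis using summable_on_iff_abs_summable_on_real by (auto simp: real_norm_def)
qed

lemma l2_add: "l2 f \<Longrightarrow> l2 g \<Longrightarrow> l2 (\<lambda>x. a * f x + b * g x)"
proof -
  assume f: "l2 f" and g: "l2 g"
  have S: "(\<lambda>x. 2 * a\<^sup>2 * (f x)\<^sup>2 + 2 * b\<^sup>2 * (g x)\<^sup>2) summable_on UNIV"
    using f g unfolding l2_def by (intro summable_on_add summable_on_cmult_right)
  have B: "(a * f x + b * g x)\<^sup>2 \<le> 2 * a\<^sup>2 * (f x)\<^sup>2 + 2 * b\<^sup>2 * (g x)\<^sup>2" for x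
    using sqdiff_le[of "a * f x" "- (b * g x)"] by (simp add: power_mult_distrib)
  show ?thesis unfolding l2_def
    by (rule summable_on_comparison_test[OF S B]) simp
qed

lemma gp_sym: "grad_prod w f k x = grad_prod w k f x"
  unfolding grad_prod_def by (simp add: mult_ac)

lemma gp_lin:
  assumes "l2 f" "l2 g" "l2 k"
  shows "grad_prod w (\<lambda>z. a * f z + b * g z) k x = a * grad_prod w f k x + b * grad_prod w g k x"
proof -
  have e: "w x y * ((a * f x + b * g x) - (a * f y + b * g y)) * (k x - k y)
      = a * (w x y * (f x - f y) * (k x - k y)) + b * (w x y * (g x - g y) * (k x - k y))" for y
    by (simp add: algebra_simps)
  have s1: "(\<lambda>y. a * (w x y * (f x - f y) * (k x - k y))) summable_on (UNIV - {x})"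
    by (intro summable_on_cmult_right inner_summable assms)
  have s2: "(\<lambda>y. b * (w x y * (g x - g y) * (k x - k y))) summable_on (UNIV - {x})"
    by (intro summable_on_cmult_right inner_summable assms)
  have "grad_prod w (\<lambda>z. a * f z + b * g z) k x = (1/2) * (infsum (\<lambda>y. a * (w x y * (f x - f y) * (k x - k y))) (UNIV - {x})
     + infsum (\<lambda>y. b * (w x y * (g x - g y) * (k x - k y))) (UNIV - {x}))"
    unfolding grad_prod_def e by (subst infsum_add[OF s1 s2]) (rule refl)
  also have "\<dots> = a * grad_prod w f k x + b * grad_prod w g k x"
    unfolding grad_prod_def infsum_cmult_right' by (simp add: algebra_simps)
  finally show ?thesis .
qed

lemma gp_nonneg: "0 \<le> grad_prod w f f x"
  unfolding grad_prod_def
  by (auto intro!: infsum_nonneg mult_nonneg_nonneg[OF w0] simp: mult.assoc)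

definition T :: "(('d \<Rightarrow> int) \<Rightarrow> real) \<Rightarrow> ('d \<Rightarrow> int) \<Rightarrow> real" where
  "T f x = infsum (\<lambda>y. w x y * (f y)\<^sup>2) (UNIV - {x})"

lemma T_summable_inner: "l2 f \<Longrightarrow> (\<lambda>y. w x y * (f y)\<^sup>2) summable_on (UNIV - {x})"
proof -
  assume f: "l2 f"
  have "(\<lambda>y. C * (f y)\<^sup>2) summable_on (UNIV - {x})"
    using f unfolding l2_def by (intro summable_on_cmult_right) (rule summable_on_subset[of _ UNIV], auto)
  thus ?thesis
  proof (rule summable_on_comparison_test)
    fix y assume "y \<in> UNIV - {x}"
    hence xy: "x \<noteq> y" by auto
    show "w x y * (f y)\<^sup>2 \<le> C * (f y)\<^sup>2" by (rule mult_right_mono[OF wC[OF xy]]) simp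
    show "0 \<le> w x y * (f y)\<^sup>2" using w0[OF xy] by simp
  qed
qed

lemma gp_le:
  assumes f: "l2 f"
  shows "grad_prod w f f x \<le> M * (f x)\<^sup>2 + T f x"
proof -
  have s1: "(\<lambda>y. w x y * (f x - f y) * (f x - f y)) summable_on (UNIV - {x})"
    by (rule inner_summable[OF f f])
  have s2: "(\<lambda>y. 2 * (f x)\<^sup>2 * w x y + 2 * (w x y * (f y)\<^sup>2)) summable_on (UNIV - {x})"
    by (intro summable_on_add summable_on_cmult_right wsum T_summable_inner f)
  have "infsum (\<lambda>y. w x y * (f x - f y) * (f x - f y)) (UNIV - {x})
      \<le> infsum (\<lambda>y. 2 * (f x)\<^sup>2 * w x y + 2 * (w x y * (f y)\<^sup>2)) (UNIV - {x})"
  proof (rule infsum_mono[OF s1 s2])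
    fix y assume y: "y \<in> UNIV - {x}"
    have "w x y * (f x - f y) * (f x - f y) = w x y * (f x - f y)\<^sup>2" by (simp add: power2_eq_square)
    also have "\<dots> \<le> w x y * (2 * (f x)\<^sup>2 + 2 * (f y)\<^sup>2)"
      by (rule mult_left_mono[OF sqdiff_le]) (use y w0 in auto)
    finally show "w x y * (f x - f y) * (f x - f y) \<le> 2 * (f x)\<^sup>2 * w x y + 2 * (w x y * (f y)\<^sup>2)"
      by (simp add: algebra_simps)
  qed
  also have "\<dots> = 2 * (f x)\<^sup>2 * infsum (\<lambda>y. w x y) (UNIV - {x}) + 2 * T f x"
    unfolding T_def
  proof (subst infsum_add)
    show "(\<lambda>y. 2 * (f x)\<^sup>2 * w x y) summable_on (UNIV - {x})" by (intro summable_on_cmult_right wsum)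
    show "(\<lambda>y. 2 * (w x y * (f y)\<^sup>2)) summable_on (UNIV - {x})" by (intro summable_on_cmult_right T_summable_inner f)
  qed (simp add: infsum_cmult_right')
  also have "\<dots> \<le> 2 * (f x)\<^sup>2 * M + 2 * T f x"
    by (intro add_right_mono mult_left_mono wM) auto
  finally show ?thesis unfolding grad_prod_def by (simp add: algebra_simps)
qed

end


lemma absprod_half: "\<bar>p * q\<bar> \<le> (1/2) * (p * p) + (1/2) * ((q::real) * q)"
proof -
  have "0 \<le> (\<bar>p\<bar> - \<bar>q\<bar>)\<^sup>2" by simp
  hence "2 * (\<bar>p\<bar> * \<bar>q\<bar>) \<le> p * p + q * q" by (simp add: power2_eq_square algebra_simps)
  thus ?thesis by (simp add: abs_mult)
qed

context WG begin

lemma T_summable: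
  assumes f: "l2 f"
  shows "(T f) summable_on UNIV \<and> infsum (T f) UNIV \<le> M * infsum (\<lambda>x. (f x)\<^sup>2) UNIV"
proof -
  define S where "S = infsum (\<lambda>x. (f x)\<^sup>2) UNIV"
  define A where "A = Sigma (UNIV::('d \<Rightarrow> int) set) (\<lambda>x. UNIV - {x})"
  define K where "K = (\<lambda>(x,y). w x y * (f y)\<^sup>2)"
  have Kpos: "z \<in> A \<Longrightarrow> 0 \<le> K z" for z
    unfolding A_def K_def by (auto intro!: mult_nonneg_nonneg w0)
  have bound: "sum K F \<le> M * S" if F: "finite F" "F \<subseteq> A" for F
  proof -
    define X where "X = fst ` F"
    define Y where "Y = snd ` F"
    have fX: "finite X" "finite Y" using F unfolding X_def Y_def by auto
    define G where "G = Sigma Y (\<lambda>y. X - {y})"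
    have fG: "finite G" unfolding G_def using fX by auto
    have FG: "F \<subseteq> prod.swap ` G"
      using F unfolding G_def X_def Y_def A_def by (force simp: image_iff)
    have fG': "finite (prod.swap ` G)" using fG by simp
    have "sum K F \<le> sum K (prod.swap ` G)"
      by (rule sum_mono2[OF fG' FG]) (auto intro!: Kpos simp: G_def A_def)
    also have "\<dots> = sum (K \<circ> prod.swap) G" by (rule sum.reindex) simp
    also have "\<dots> = (\<Sum>y\<in>Y. \<Sum>x\<in>X - {y}. w x y * (f y)\<^sup>2)"
      unfolding G_def K_def using fX by (subst sum.Sigma) auto
    also have "\<dots> = (\<Sum>y\<in>Y. (\<Sum>x\<in>X - {y}. w y x) * (f y)\<^sup>2)"
      by (intro sum.cong refl) (auto simp: sum_distrib_right wsym intro!: sum.cong)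
    also have "\<dots> \<le> (\<Sum>y\<in>Y. M * (f y)\<^sup>2)"
    proof (intro sum_mono mult_right_mono)
      fix y assume "y \<in> Y"
      have "(\<Sum>x\<in>X - {y}. w y x) \<le> infsum (\<lambda>x. w y x) (UNIV - {y})"
        by (rule finite_sum_le_infsum[OF wsum]) (use fX w0 in auto)
      also have "\<dots> \<le> M" by (rule wM)
      finally show "(\<Sum>x\<in>X - {y}. w y x) \<le> M" .
    qed simp
    also have "\<dots> = M * sum (\<lambda>y. (f y)\<^sup>2) Y" by (simp add: sum_distrib_left)
    also have "\<dots> \<le> M * S" unfolding S_def
      by (intro mult_left_mono M0 finite_sum_le_infsum) (use f fX in \<open>auto simp: l2_def\<close>)
    finally show ?thesis .
  qed
  have KS: "K summable_on A"
    by (rule nonneg_bdd_above_summable_on) (use Kpos bound in \<open>auto intro!: bdd_aboveI2\<close>)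
  have inner: "(\<lambda>y. K (x, y)) summable_on (UNIV - {x})" for x
    unfolding K_def using T_summable_inner[OF f] by simp
  have TE: "T f = (\<lambda>x. infsum (\<lambda>y. K (x, y)) (UNIV - {x}))"
    unfolding T_def K_def by auto
  have s: "(T f) summable_on UNIV"
    unfolding TE A_def by (rule summable_on_SigmaD) (use KS inner in \<open>auto simp: A_def\<close>)
  have "infsum (T f) UNIV = infsum K A"
    unfolding TE A_def by (rule infsum_Sigma_banach) (use KS in \<open>simp add: A_def\<close>)
  also have "\<dots> \<le> M * S"
    by (rule infsum_le_finite_sums[OF KS bound])
  finally show ?thesis using s unfolding S_def by simp
qed

lemma gp_summable:
  assumes f: "l2 f"
  shows "(\<lambda>x. grad_prod w f f x) summable_on UNIV \<and>
         infsum (\<lambda>x. grad_prod w f f x) UNIV \<le> 2 * M * infsum (\<lambda>x. (f x)\<^sup>2) UNIV"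
proof -
  have T: "(T f) summable_on UNIV" "infsum (T f) UNIV \<le> M * infsum (\<lambda>x. (f x)\<^sup>2) UNIV"
    using T_summable[OF f] by auto
  have f2: "(\<lambda>x. (f x)\<^sup>2) summable_on UNIV" using f by (simp add: l2_def)
  have G: "(\<lambda>x. M * (f x)\<^sup>2 + T f x) summable_on UNIV"
    by (intro summable_on_add summable_on_cmult_right f2 T(1))
  have s: "(\<lambda>x. grad_prod w f f x) summable_on UNIV"
    by (rule summable_on_comparison_test[OF G]) (use gp_le[OF f] gp_nonneg in auto)
  have "infsum (\<lambda>x. grad_prod w f f x) UNIV \<le> infsum (\<lambda>x. M * (f x)\<^sup>2 + T f x) UNIV"
    by (rule infsum_mono[OF s G]) (use gp_le[OF f] in auto)
  also have "\<dots> = M * infsum (\<lambda>x. (f x)\<^sup>2) UNIV + infsum (T f) UNIV"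
    by (subst infsum_add) (auto intro!: summable_on_cmult_right f2 T(1) simp: infsum_cmult_right')
  also have "\<dots> \<le> 2 * M * infsum (\<lambda>x. (f x)\<^sup>2) UNIV" using T(2) by simp
  finally show ?thesis using s by simp
qed

lemma gp_cross_bound:
  assumes f: "l2 f" and k: "l2 k"
  shows "\<bar>grad_prod w f k x\<bar> \<le> (1/2) * (grad_prod w f f x + grad_prod w k k x)"
proof -
  define a where "a = (\<lambda>y. w x y * (f x - f y) * (k x - k y))"
  define b where "b = (\<lambda>y. (1/2) * (w x y * (f x - f y) * (f x - f y)) + (1/2) * (w x y * (k x - k y) * (k x - k y)))"
  have sa: "a summable_on (UNIV - {x})" unfolding a_def by (rule inner_summable[OF f k])
  have sff: "(\<lambda>y. w x y * (f x - f y) * (f x - f y)) summable_on (UNIV - {x})" by (rule inner_summable[OF f f])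
  have skk: "(\<lambda>y. w x y * (k x - k y) * (k x - k y)) summable_on (UNIV - {x})" by (rule inner_summable[OF k k])
  have sb: "b summable_on (UNIV - {x})" unfolding b_def
    by (intro summable_on_add summable_on_cmult_right sff skk)
  have pt: "\<bar>a y\<bar> \<le> b y" if "y \<in> UNIV - {x}" for y
  proof -
    have xy: "x \<noteq> y" using that by auto
    have "\<bar>(f x - f y) * (k x - k y)\<bar> \<le> (1/2) * ((f x - f y) * (f x - f y)) + (1/2) * ((k x - k y) * (k x - k y))"
      by (rule absprod_half)
    hence "w x y * \<bar>(f x - f y) * (k x - k y)\<bar> \<le> w x y * ((1/2) * ((f x - f y) * (f x - f y)) + (1/2) * ((k x - k y) * (k x - k y)))"
      by (rule mult_left_mono) (use w0[OF xy] in auto)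
    moreover have "\<bar>a y\<bar> = w x y * \<bar>(f x - f y) * (k x - k y)\<bar>"
      unfolding a_def using w0[OF xy] by (simp add: abs_mult mult.assoc)
    moreover have "b y = w x y * ((1/2) * ((f x - f y) * (f x - f y)) + (1/2) * ((k x - k y) * (k x - k y)))"
      unfolding b_def by (simp add: algebra_simps)
    ultimately show ?thesis by simp
  qed
  have "infsum a (UNIV - {x}) \<le> infsum b (UNIV - {x})"
    by (rule infsum_mono[OF sa sb]) (use pt in force)
  moreover have "- infsum a (UNIV - {x}) \<le> infsum b (UNIV - {x})"
  proof -
    have "infsum (\<lambda>y. - a y) (UNIV - {x}) \<le> infsum b (UNIV - {x})"
      by (rule infsum_mono[OF _ sb]) (use pt sa in \<open>force simp: summable_on_uminus\<close>)+
    thus ?thesis by (simp add: infsum_uminus)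
  qed
  moreover have "infsum b (UNIV - {x}) = (1/2) * infsum (\<lambda>y. w x y * (f x - f y) * (f x - f y)) (UNIV - {x})
       + (1/2) * infsum (\<lambda>y. w x y * (k x - k y) * (k x - k y)) (UNIV - {x})"
    unfolding b_def
    by (subst infsum_add[OF summable_on_cmult_right[OF sff] summable_on_cmult_right[OF skk]])
       (simp only: infsum_cmult_right')
  ultimately show ?thesis unfolding grad_prod_def a_def by (simp add: abs_le_iff algebra_simps)
qed

lemma gp_cross_summable:
  assumes f: "l2 f" and k: "l2 k"
  shows "(\<lambda>x. grad_prod w f k x) summable_on UNIV"
proof -
  have G: "(\<lambda>x. (1/2) * (grad_prod w f f x + grad_prod w k k x)) summable_on UNIV"
    using gp_summable[OF f] gp_summable[OF k] by (intro summable_on_cmult_right summable_on_add) auto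
  have "(\<lambda>x. \<bar>grad_prod w f k x\<bar>) summable_on UNIV"
    by (rule summable_on_comparison_test[OF G]) (use gp_cross_bound[OF f k] in auto)
  thus ?thesis using summable_on_iff_abs_summable_on_real by (auto simp: real_norm_def)
qed

end


lemma finsupp_infsum:
  fixes F :: "'a set" and q :: "'a \<Rightarrow> real"
  assumes "finite F"
  shows "(\<lambda>x. if x \<in> F then q x else 0) summable_on UNIV \<and> infsum (\<lambda>x. if x \<in> F then q x else 0) UNIV = sum q F"
proof -
  have "(\<lambda>x. if x \<in> F then q x else 0) summable_on UNIV \<longleftrightarrow> q summable_on F"
    by (rule summable_on_cong_neutral) auto
  moreover have "infsum (\<lambda>x. if x \<in> F then q x else 0) UNIV = infsum q F"
    by (rule infsum_cong_neutral) auto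
  ultimately show ?thesis using assms by simp
qed

context WG begin

lemma l2_W:
  assumes f: "l2 f"
  shows "f \<in> W_space w"
proof -
  define S where "S = infsum (\<lambda>x. (f x)\<^sup>2) UNIV"
  have f2: "(\<lambda>x. (f x)\<^sup>2) summable_on UNIV" using f by (simp add: l2_def)
  have "\<exists>F. finite F \<and> dist (sum (\<lambda>x. (f x)\<^sup>2) F) S \<le> inverse (real (Suc n))" for n
    using infsum_finite_approximation[OF f2, of "inverse (real (Suc n))"] unfolding S_def by auto
  then obtain Fs where Fs: "\<And>n. finite (Fs n)"
    "\<And>n. dist (sum (\<lambda>x. (f x)\<^sup>2) (Fs n)) S \<le> inverse (real (Suc n))" by metis
  define \<phi> where "\<phi> = (\<lambda>n x. if x \<in> Fs n then f x else 0)"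
  define gn where "gn = (\<lambda>n x. if x \<in> Fs n then 0 else f x)"
  have gd: "(\<lambda>x. f x - \<phi> n x) = gn n" for n unfolding \<phi>_def gn_def by auto
  have lg: "l2 (gn n)" for n unfolding l2_def
    by (rule summable_on_comparison_test[OF f2]) (auto simp: gn_def)
  have sg: "infsum (\<lambda>x. (gn n x)\<^sup>2) UNIV \<le> inverse (real (Suc n))" for n
  proof -
    have e: "(\<lambda>x. (f x)\<^sup>2) = (\<lambda>x. (gn n x)\<^sup>2 + (if x \<in> Fs n then (f x)\<^sup>2 else 0))"
      by (auto simp: gn_def)
    have h: "(\<lambda>x. if x \<in> Fs n then (f x)\<^sup>2 else 0) summable_on UNIV"
         "infsum (\<lambda>x. if x \<in> Fs n then (f x)\<^sup>2 else 0) UNIV = sum (\<lambda>x. (f x)\<^sup>2) (Fs n)"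
      using finsupp_infsum[OF Fs(1), where q="\<lambda>x. (f x)\<^sup>2"] by auto
    have "S = infsum (\<lambda>x. (gn n x)\<^sup>2) UNIV + sum (\<lambda>x. (f x)\<^sup>2) (Fs n)"
      unfolding S_def by (subst e, subst infsum_add) (use lg h in \<open>auto simp: l2_def\<close>)
    moreover have "sum (\<lambda>x. (f x)\<^sup>2) (Fs n) \<le> S"
      unfolding S_def by (rule finite_sum_le_infsum[OF f2 Fs(1)]) auto
    ultimately show ?thesis using Fs(2)[of n] by (simp add: dist_real_def)
  qed
  have Wb: "W_norm_sq w (gn n) \<le> (2 * M + 1) * inverse (real (Suc n))" for n
  proof -
    have g1: "(\<lambda>x. grad_prod w (gn n) (gn n) x) summable_on UNIV"
      and g2: "infsum (\<lambda>x. grad_prod w (gn n) (gn n) x) UNIV \<le> 2 * M * infsum (\<lambda>x. (gn n x)\<^sup>2) UNIV"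
      using gp_summable[OF lg] by auto
    have "W_norm_sq w (gn n) = infsum (\<lambda>x. grad_prod w (gn n) (gn n) x) UNIV + infsum (\<lambda>x. (gn n x)\<^sup>2) UNIV"
      unfolding W_norm_sq_def by (rule infsum_add[OF g1]) (use lg in \<open>simp add: l2_def\<close>)
    also have "\<dots> \<le> (2 * M + 1) * infsum (\<lambda>x. (gn n x)\<^sup>2) UNIV" using g2 by (simp add: algebra_simps)
    also have "\<dots> \<le> (2 * M + 1) * inverse (real (Suc n))"
      using sg[of n] M0 by (intro mult_left_mono) auto
    finally show ?thesis .
  qed
  have W0: "0 \<le> W_norm_sq w (gn n)" for n
    unfolding W_norm_sq_def by (intro infsum_nonneg add_nonneg_nonneg gp_nonneg) auto
  have lim: "(\<lambda>n. (2 * M + 1) * inverse (real (Suc n))) \<longlonglongrightarrow> 0"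
    using tendsto_mult_right_zero[OF LIMSEQ_inverse_real_of_nat] by simp
  have "(\<lambda>n. W_norm_sq w (\<lambda>x. f x - \<phi> n x)) \<longlonglongrightarrow> 0"
    unfolding gd by (rule tendsto_sandwich[OF _ _ tendsto_const lim]) (use W0 Wb in auto)
  moreover have "finite {x. \<phi> n x \<noteq> 0}" for n
    by (rule finite_subset[OF _ Fs(1)[of n]]) (auto simp: \<phi>_def)
  ultimately show ?thesis unfolding W_space_def using gp_summable[OF f] f2 by blast
qed

lemma l2_H:
  assumes f: "l2 f" and h: "(\<lambda>x. h x * (f x)\<^sup>2) summable_on UNIV"
  shows "f \<in> H_space w h"
  unfolding H_space_def using l2_W[OF f] h by simp

end


lemma powr_split:
  fixes y p :: real
  assumes y: "0 < y" shows "y powr p = y^2 * y powr (p - 2)"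
proof -
  have "y powr p = y powr 2 * y powr (p - 2)" by (simp add: powr_add[symmetric])
  thus ?thesis using y by simp
qed

lemma powr_bound:
  fixes y K p :: real
  assumes "0 \<le> y" "y \<le> K" "2 \<le> p"
  shows "y powr p \<le> K powr (p - 2) * y^2"
proof (cases "y = 0")
  case True thus ?thesis by simp
next
  case False
  hence y: "0 < y" using assms by simp
  have "y powr (p - 2) \<le> K powr (p - 2)" using assms y by (intro powr_mono2) auto
  hence "y^2 * y powr (p - 2) \<le> y^2 * K powr (p - 2)" by (intro mult_left_mono) auto
  thus ?thesis using powr_split[OF y, of p] by (simp add: mult_ac)
qed

lemma log_bound:
  fixes y K p :: real
  assumes y: "0 < y" "y \<le> K" and K: "1 \<le> K" and p: "3 \<le> p"
  shows "\<bar>y powr p * ln (y^2)\<bar> \<le> (2 + 2 * K powr (p - 1)) * y^2"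
proof (cases "y \<le> 1")
  case True
  have ln2: "ln (y^2) = 2 * ln y" using y by (simp add: ln_realpow)
  have lnneg: "ln y \<le> 0" using True y by simp
  have "ln (1 / y) \<le> 1 / y - 1" using y by (intro ln_le_minus_one) auto
  hence l1: "- ln y \<le> 1 / y" using y by (simp add: ln_div)
  have "y powr p = y^2 * y * y powr (p - 3)"
  proof -
    have "y powr p = y powr 3 * y powr (p - 3)" by (simp add: powr_add[symmetric])
    thus ?thesis using y by (simp add: power3_eq_cube power2_eq_square)
  qed
  moreover have "y powr (p - 3) \<le> 1"
    using powr_mono'[of 0 "p - 3" y] True y p by simp
  moreover have "0 \<le> y powr (p - 3)" by simp
  ultimately have ypb: "y powr p \<le> y^2 * y" using y
    by (metis mult_left_le mult_nonneg_nonneg less_imp_le zero_le_power2)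
  have "\<bar>y powr p * ln (y^2)\<bar> = y powr p * (2 * (- ln y))" using ln2 lnneg by (simp add: abs_mult)
  also have "\<dots> \<le> (y^2 * y) * (2 * (1 / y))"
    using ypb l1 lnneg y by (intro mult_mono) auto
  also have "\<dots> = 2 * y^2" using y by (simp add: power2_eq_square)
  also have "\<dots> \<le> (2 + 2 * K powr (p - 1)) * y^2" by (simp add: algebra_simps)
  finally show ?thesis .
next
  case False
  hence y1: "1 < y" by simp
  have ln2: "ln (y^2) = 2 * ln y" using y by (simp add: ln_realpow)
  have lnpos: "0 \<le> ln y" using y1 by simp
  have lny: "ln y \<le> y" using y by (simp add: less_imp_le)
  have pb: "y powr p \<le> K powr (p - 2) * y^2" by (rule powr_bound) (use y p in auto)
  have "\<bar>y powr p * ln (y^2)\<bar> = y powr p * (2 * ln y)" using ln2 lnpos by (simp add: abs_mult)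
  also have "\<dots> \<le> (K powr (p - 2) * y^2) * (2 * K)"
    using pb lny lnpos y by (intro mult_mono) auto
  also have "\<dots> = 2 * (K powr (p - 2) * K) * y^2" by (simp add: algebra_simps)
  also have "K powr (p - 2) * K = K powr (p - 1)"
  proof -
    have "K powr (p - 1) = K powr (p - 2 + 1)" by simp
    also have "\<dots> = K powr (p - 2) * K powr 1" by (rule powr_add)
    also have "K powr 1 = K" using K by simp
    finally show ?thesis by simp
  qed
  finally have "\<bar>y powr p * ln (y^2)\<bar> \<le> 2 * K powr (p - 1) * y^2" by (simp add: algebra_simps)
  moreover have "0 \<le> 2 * y^2" by simp
  moreover have "(2 + 2 * K powr (p - 1)) * y^2 = 2 * y^2 + 2 * K powr (p - 1) * y^2" by (simp add: algebra_simps)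
  ultimately show ?thesis by linarith
qed

lemma l2_bounded:
  assumes "l2 f"
  obtains K where "1 \<le> K" "\<And>x. \<bar>f x\<bar> \<le> K"
proof -
  define S where "S = infsum (\<lambda>x. (f x)\<^sup>2) UNIV"
  have "\<bar>f x\<bar> \<le> max 1 (sqrt S)" for x
  proof -
    have "(f x)^2 \<le> S" unfolding S_def by (rule l2_le[OF assms])
    hence "\<bar>f x\<bar> \<le> sqrt S" using real_le_rsqrt by simp
    thus ?thesis by simp
  qed
  thus ?thesis using that[of "max 1 (sqrt S)"] by simp
qed

lemma l2_powr_summable:
  assumes f: "l2 f" and p: "3 \<le> p"
  shows "(\<lambda>x. \<bar>f x\<bar> powr p) summable_on UNIV"
    and "(\<lambda>x. \<bar>f x\<bar> powr p * ln ((f x)^2)) summable_on UNIV"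
proof -
  obtain K where K: "1 \<le> K" "\<And>x. \<bar>f x\<bar> \<le> K" using l2_bounded[OF f] by blast
  have f2: "(\<lambda>x. (f x)\<^sup>2) summable_on UNIV" using f by (simp add: l2_def)
  show "(\<lambda>x. \<bar>f x\<bar> powr p) summable_on UNIV"
  proof (rule summable_on_comparison_test)
    show "(\<lambda>x. K powr (p - 2) * (f x)^2) summable_on UNIV" by (intro summable_on_cmult_right f2)
    show "\<bar>f x\<bar> powr p \<le> K powr (p - 2) * (f x)^2" for x
      using powr_bound[of "\<bar>f x\<bar>" K p] K p by simp
  qed auto
  have "(\<lambda>x. \<bar>\<bar>f x\<bar> powr p * ln ((f x)^2)\<bar>) summable_on UNIV"
  proof (rule summable_on_comparison_test)
    show "(\<lambda>x. (2 + 2 * K powr (p - 1)) * (f x)^2) summable_on UNIV" by (intro summable_on_cmult_right f2)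
    show "\<bar>\<bar>f x\<bar> powr p * ln ((f x)^2)\<bar> \<le> (2 + 2 * K powr (p - 1)) * (f x)^2" for x
    proof (cases "f x = 0")
      case True thus ?thesis by simp
    next
      case False
      thus ?thesis using log_bound[of "\<bar>f x\<bar>" K p] K p by simp
    qed
  qed auto
  thus "(\<lambda>x. \<bar>f x\<bar> powr p * ln ((f x)^2)) summable_on UNIV"
    using summable_on_iff_abs_summable_on_real by (auto simp: real_norm_def)
qed

lemma logterm_mult:
  fixes c y p :: real
  assumes c: "c \<noteq> 0"
  shows "logterm p (c * y) * (c * y) = \<bar>c\<bar> powr p * ln (c^2) * \<bar>y\<bar> powr p + \<bar>c\<bar> powr p * (\<bar>y\<bar> powr p * ln (y^2))"
proof (cases "y = 0")
  case True thus ?thesis by (simp add: logterm_def)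
next
  case False
  have cy: "c * y \<noteq> 0" using c False by simp
  have a: "0 < \<bar>c * y\<bar>" using cy by simp
  have 1: "logterm p (c * y) * (c * y) = \<bar>c * y\<bar> powr (p - 2) * (c * y)^2 * ln ((c * y)^2)"
    using cy by (simp add: logterm_def power2_eq_square mult_ac)
  have 2: "\<bar>c * y\<bar> powr (p - 2) * (c * y)^2 = \<bar>c * y\<bar> powr p"
  proof -
    have "(c * y)^2 = \<bar>c * y\<bar> powr 2" using a by simp
    hence "\<bar>c * y\<bar> powr (p - 2) * (c * y)^2 = \<bar>c * y\<bar> powr (p - 2) * \<bar>c * y\<bar> powr 2" by simp
    also have "\<dots> = \<bar>c * y\<bar> powr p" by (subst powr_add[symmetric]) simp
    finally show ?thesis .
  qed
  have 3: "\<bar>c * y\<bar> powr p = \<bar>c\<bar> powr p * \<bar>y\<bar> powr p" by (simp add: abs_mult powr_mult)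
  have 4: "ln ((c * y)^2) = ln (c^2) + ln (y^2)"
    using c False by (simp add: power_mult_distrib ln_mult)
  show ?thesis unfolding 1 2 3 4 by (simp add: algebra_simps)
qed


context WG begin

lemma gp_scale2: "grad_prod w f (\<lambda>z. c * k z) x = c * grad_prod w f k x"
proof -
  have "(\<lambda>y. w x y * (f x - f y) * (c * k x - c * k y)) = (\<lambda>y. c * (w x y * (f x - f y) * (k x - k y)))"
    by (auto simp: algebra_simps)
  thus ?thesis unfolding grad_prod_def by (simp add: infsum_cmult_right')
qed

lemma jder_formula:
  fixes r t :: real
  assumes f: "l2 f" and g: "l2 g" and fg: "\<And>x. f x * g x = 0"
    and hf: "(\<lambda>x. h x * (f x)\<^sup>2) summable_on UNIV" and r: "r \<noteq> 0" and p: "3 \<le> p"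
  shows "Jder a b p w h (\<lambda>x. r * f x + t * g x) (\<lambda>x. r * f x) =
    a * (r^2 * grad_norm_sq w f + r * t * infsum (\<lambda>x. grad_prod w f g x) UNIV)
    + r^2 * infsum (\<lambda>x. h x * (f x)\<^sup>2) UNIV
    + b * (r^2 * grad_norm_sq w f + 2 * r * t * infsum (\<lambda>x. grad_prod w f g x) UNIV + t^2 * grad_norm_sq w g)
        * (r^2 * grad_norm_sq w f + r * t * infsum (\<lambda>x. grad_prod w f g x) UNIV)
    - (\<bar>r\<bar> powr p * ln (r^2) * infsum (\<lambda>x. \<bar>f x\<bar> powr p) UNIV
       + \<bar>r\<bar> powr p * infsum (\<lambda>x. \<bar>f x\<bar> powr p * ln ((f x)^2)) UNIV)"
proof -
  define v where "v = (\<lambda>x. r * f x + t * g x)"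
  define Pf where "Pf = grad_norm_sq w f"
  define Pg where "Pg = grad_norm_sq w g"
  define Bq where "Bq = infsum (\<lambda>x. grad_prod w f g x) UNIV"
  define Hf where "Hf = infsum (\<lambda>x. h x * (f x)\<^sup>2) UNIV"
  define Lf where "Lf = infsum (\<lambda>x. \<bar>f x\<bar> powr p) UNIV"
  define Gf where "Gf = infsum (\<lambda>x. \<bar>f x\<bar> powr p * ln ((f x)^2)) UNIV"
  have lv: "l2 v" unfolding v_def by (rule l2_add[OF f g])
  have Sff: "(\<lambda>x. grad_prod w f f x) summable_on UNIV" using gp_summable[OF f] by simp
  have Sgg: "(\<lambda>x. grad_prod w g g x) summable_on UNIV" using gp_summable[OF g] by simp
  have Sfg: "(\<lambda>x. grad_prod w f g x) summable_on UNIV" by (rule gp_cross_summable[OF f g])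
  have gvf: "grad_prod w v f x = r * grad_prod w f f x + t * grad_prod w f g x" for x
    unfolding v_def by (subst gp_lin[OF f g f]) (simp add: gp_sym[of g f])
  have gvg: "grad_prod w v g x = r * grad_prod w f g x + t * grad_prod w g g x" for x
    unfolding v_def by (subst gp_lin[OF f g g]) simp
  have gpv: "grad_prod w v (\<lambda>x. r * f x) x = r^2 * grad_prod w f f x + r * t * grad_prod w f g x" for x
    by (simp add: gp_scale2 gvf power2_eq_square algebra_simps)
  have gvv: "grad_prod w v v x = r^2 * grad_prod w f f x + 2 * r * t * grad_prod w f g x + t^2 * grad_prod w g g x" for x
  proof -
    have "grad_prod w v v x = r * grad_prod w f v x + t * grad_prod w g v x"
      unfolding v_def by (rule gp_lin[OF f g lv[unfolded v_def]])
    also have "\<dots> = r * grad_prod w v f x + t * grad_prod w v g x" by (simp add: gp_sym)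
    finally show ?thesis by (simp add: gvf gvg power2_eq_square algebra_simps)
  qed
  have I1: "infsum (\<lambda>x. grad_prod w v (\<lambda>x. r * f x) x) UNIV = r^2 * Pf + r * t * Bq"
    unfolding gpv Pf_def Bq_def grad_norm_sq_def
    by (subst infsum_add) (auto intro!: summable_on_cmult_right Sff Sfg simp: infsum_cmult_right')
  have GN: "grad_norm_sq w v = r^2 * Pf + 2 * r * t * Bq + t^2 * Pg"
    unfolding grad_norm_sq_def gvv Pf_def Pg_def Bq_def
    by (subst infsum_add | subst infsum_cmult_right' | rule summable_on_add summable_on_cmult_right Sff Sfg Sgg)+ simp
  have pt1: "a * grad_prod w v (\<lambda>x. r * f x) x + h x * v x * (r * f x)
        = a * (r^2 * grad_prod w f f x + r * t * grad_prod w f g x) + r^2 * (h x * (f x)\<^sup>2)" for x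
  proof -
    have vf: "v x * f x = r * (f x)\<^sup>2" unfolding v_def using fg[of x] by (simp add: algebra_simps power2_eq_square)
    have "h x * v x * (r * f x) = r * h x * (v x * f x)" by (simp add: mult_ac)
    also have "\<dots> = r^2 * (h x * (f x)\<^sup>2)" unfolding vf by (simp add: power2_eq_square mult_ac)
    finally have "h x * v x * (r * f x) = r^2 * (h x * (f x)\<^sup>2)" .
    thus ?thesis using gpv[of x] by simp
  qed
  have J1: "infsum (\<lambda>x. a * grad_prod w v (\<lambda>x. r * f x) x + h x * v x * (r * f x)) UNIV
      = a * (r^2 * Pf + r * t * Bq) + r^2 * Hf"
  proof -
    have s1: "(\<lambda>x. a * (r^2 * grad_prod w f f x + r * t * grad_prod w f g x)) summable_on UNIV"
      by (intro summable_on_cmult_right summable_on_add Sff Sfg)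
    have s2: "(\<lambda>x. r^2 * (h x * (f x)\<^sup>2)) summable_on UNIV" by (intro summable_on_cmult_right hf)
    have "infsum (\<lambda>x. a * grad_prod w v (\<lambda>x. r * f x) x + h x * v x * (r * f x)) UNIV
       = infsum (\<lambda>x. a * (r^2 * grad_prod w f f x + r * t * grad_prod w f g x)) UNIV + infsum (\<lambda>x. r^2 * (h x * (f x)\<^sup>2)) UNIV"
      unfolding pt1 by (rule infsum_add[OF s1 s2])
    also have "infsum (\<lambda>x. a * (r^2 * grad_prod w f f x + r * t * grad_prod w f g x)) UNIV = a * (r^2 * Pf + r * t * Bq)"
      unfolding infsum_cmult_right' Pf_def Bq_def grad_norm_sq_def
      by (subst infsum_add) (auto intro!: summable_on_cmult_right Sff Sfg simp: infsum_cmult_right')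
    also have "infsum (\<lambda>x. r^2 * (h x * (f x)\<^sup>2)) UNIV = r^2 * Hf" unfolding Hf_def by (rule infsum_cmult_right')
    finally show ?thesis .
  qed
  have Lsum: "(\<lambda>x. \<bar>f x\<bar> powr p) summable_on UNIV" "(\<lambda>x. \<bar>f x\<bar> powr p * ln ((f x)^2)) summable_on UNIV"
    using l2_powr_summable[OF f p] by auto
  have pt2: "logterm p (v x) * (r * f x) = \<bar>r\<bar> powr p * ln (r^2) * \<bar>f x\<bar> powr p + \<bar>r\<bar> powr p * (\<bar>f x\<bar> powr p * ln ((f x)^2))" for x
  proof (cases "f x = 0")
    case True thus ?thesis by simp
  next
    case False
    hence "g x = 0" using fg[of x] by simp
    hence "v x = r * f x" unfolding v_def by simp
    thus ?thesis using logterm_mult[OF r, of p "f x"] by simp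
  qed
  have J3: "infsum (\<lambda>x. logterm p (v x) * (r * f x)) UNIV = \<bar>r\<bar> powr p * ln (r^2) * Lf + \<bar>r\<bar> powr p * Gf"
    unfolding pt2 Lf_def Gf_def
    by (subst infsum_add) (auto intro!: summable_on_cmult_right Lsum simp: infsum_cmult_right')
  show ?thesis
    unfolding Jder_def v_def[symmetric] J1 I1 GN J3
    unfolding Pf_def Pg_def Bq_def Hf_def Lf_def Gf_def by simp
qed

end


definition Dq :: "real \<Rightarrow> real \<Rightarrow> real \<Rightarrow> real \<Rightarrow> real \<Rightarrow> real \<Rightarrow> real \<Rightarrow> real \<Rightarrow> real" where
  "Dq a b P N B H r t = a * (r^2 * P + r * t * B) + r^2 * H
     + b * (r^2 * P + 2 * r * t * B + t^2 * N) * (r^2 * P + r * t * B)"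

definition Phi :: "real \<Rightarrow> real \<Rightarrow> real \<Rightarrow> real \<Rightarrow> real \<Rightarrow> real \<Rightarrow> real \<Rightarrow> real \<Rightarrow> real \<Rightarrow> real \<Rightarrow> real \<Rightarrow> real" where
  "Phi a b p P N B H L G r t = Dq a b P N B H r t - r powr p * (2 * ln r * L + G)"

locale SC =
  fixes a b p P N B H L G :: real
  assumes a: "0 < a" and b: "0 < b" and P: "0 \<le> P" and N: "0 \<le> N" and B: "0 \<le> B"
    and H: "0 < H" and L: "0 < L" and p: "4 \<le> p"
begin

abbreviation "D \<equiv> Dq a b P N B H"
abbreviation "F \<equiv> Phi a b p P N B H L G"

lemma D_pos: "0 < r \<Longrightarrow> 0 < t \<Longrightarrow> 0 < D r t"
  unfolding Dq_def using a b P N B H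
  by (intro add_nonneg_pos add_pos_nonneg mult_nonneg_nonneg add_nonneg_nonneg) auto

lemma D_up:
  assumes l: "1 < l" and r0: "0 < r0" and t0: "0 < t0" and t: "0 < t" "t \<le> l * t0"
  shows "D (l * r0) t < l^4 * D r0 t0"
proof -
  define X0 where "X0 = r0^2 * P + r0 * t0 * B"
  define Y0 where "Y0 = r0^2 * P + 2 * r0 * t0 * B + t0^2 * N"
  define X where "X = (l*r0)^2 * P + (l*r0) * t * B"
  define Y where "Y = (l*r0)^2 * P + 2 * (l*r0) * t * B + t^2 * N"
  have X0: "0 \<le> X0" "0 \<le> Y0" unfolding X0_def Y0_def using r0 t0 P B N by auto
  have X: "0 \<le> X" "0 \<le> Y" unfolding X_def Y_def using r0 t l P B N by auto
  have rt: "(l*r0) * t * B \<le> l^2 * (r0 * t0 * B)"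
  proof -
    have "(l*r0) * t \<le> (l*r0) * (l*t0)" using t r0 l by (intro mult_left_mono) auto
    hence "(l*r0) * t * B \<le> (l*r0) * (l*t0) * B" using B by (intro mult_right_mono) auto
    thus ?thesis by (simp add: power2_eq_square mult_ac)
  qed
  have tt: "t^2 * N \<le> l^2 * (t0^2 * N)"
  proof -
    have "t^2 \<le> (l*t0)^2" using t by (intro power_mono) auto
    hence "t^2 * N \<le> (l*t0)^2 * N" using N by (intro mult_right_mono) auto
    thus ?thesis by (simp add: power_mult_distrib mult_ac)
  qed
  have XX: "X \<le> l^2 * X0" unfolding X_def X0_def using rt by (simp add: power_mult_distrib algebra_simps)
  have YY: "Y \<le> l^2 * Y0" unfolding Y_def Y0_def using rt tt by (simp add: power_mult_distrib algebra_simps)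
  have l24: "l^2 \<le> l^4" using l by (intro power_increasing) auto
  have l24s: "l^2 < l^4" using l by (intro power_strict_increasing) auto
  have "a * X \<le> a * (l^4 * X0)"
    using XX l24 X0 a by (intro mult_left_mono order.trans[OF XX] mult_right_mono) auto
  moreover have "(l*r0)^2 * H < l^4 * (r0^2 * H)"
  proof -
    have "(l*r0)^2 * H = l^2 * (r0^2 * H)" by (simp add: power_mult_distrib)
    also have "\<dots> < l^4 * (r0^2 * H)" using l24s r0 H by (intro mult_strict_right_mono) auto
    finally show ?thesis .
  qed
  moreover have "b * Y * X \<le> b * (l^2 * Y0) * (l^2 * X0)"
    using XX YY X X0 b by (intro mult_mono mult_left_mono) auto
  ultimately have "a * X + (l*r0)^2 * H + b * Y * X < a * (l^4 * X0) + l^4 * (r0^2 * H) + b * (l^2 * Y0) * (l^2 * X0)"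
    by linarith
  also have "\<dots> = l^4 * D r0 t0" unfolding Dq_def X0_def Y0_def by (simp add: algebra_simps power2_eq_square power4_eq_xxxx)
  finally show ?thesis unfolding Dq_def X_def Y_def .
qed

lemma D_down:
  assumes m: "0 < m" "m < 1" and r0: "0 < r0" and t0: "0 < t0" and t: "m * t0 \<le> t"
  shows "m^4 * D r0 t0 < D (m * r0) t"
proof -
  define X0 where "X0 = r0^2 * P + r0 * t0 * B"
  define Y0 where "Y0 = r0^2 * P + 2 * r0 * t0 * B + t0^2 * N"
  define X where "X = (m*r0)^2 * P + (m*r0) * t * B"
  define Y where "Y = (m*r0)^2 * P + 2 * (m*r0) * t * B + t^2 * N"
  have tp: "0 < t" using m t0 t by (smt (verit) mult_pos_pos)
  have X0: "0 \<le> X0" "0 \<le> Y0" unfolding X0_def Y0_def using r0 t0 P B N by auto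
  have rt: "m^2 * (r0 * t0 * B) \<le> (m*r0) * t * B"
  proof -
    have "(m*r0) * (m*t0) \<le> (m*r0) * t" using t r0 m by (intro mult_left_mono) auto
    hence "(m*r0) * (m*t0) * B \<le> (m*r0) * t * B" using B by (intro mult_right_mono) auto
    thus ?thesis by (simp add: power2_eq_square mult_ac)
  qed
  have tt: "m^2 * (t0^2 * N) \<le> t^2 * N"
  proof -
    have "(m*t0)^2 \<le> t^2" using t m t0 by (intro power_mono) auto
    hence "(m*t0)^2 * N \<le> t^2 * N" using N by (intro mult_right_mono) auto
    thus ?thesis by (simp add: power_mult_distrib mult_ac)
  qed
  have XX: "m^2 * X0 \<le> X" unfolding X_def X0_def using rt by (simp add: power_mult_distrib algebra_simps)
  have YY: "m^2 * Y0 \<le> Y" unfolding Y_def Y0_def using rt tt by (simp add: power_mult_distrib algebra_simps)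
  have m24: "m^4 \<le> m^2" using m by (intro power_decreasing) auto
  have m24s: "m^4 < m^2" using m by (intro power_strict_decreasing) auto
  have m2: "0 \<le> m^2" by simp
  have "a * (m^4 * X0) \<le> a * X"
    using XX m24 X0 a by (intro mult_left_mono order.trans[OF _ XX] mult_right_mono) auto
  moreover have "m^4 * (r0^2 * H) < (m*r0)^2 * H"
  proof -
    have "m^4 * (r0^2 * H) < m^2 * (r0^2 * H)" using m24s r0 H by (intro mult_strict_right_mono) auto
    also have "\<dots> = (m*r0)^2 * H" by (simp add: power_mult_distrib)
    finally show ?thesis .
  qed
  moreover have "b * (m^2 * Y0) * (m^2 * X0) \<le> b * Y * X"
  proof -
    have Yp: "0 \<le> Y" using YY m2 X0 by (smt (verit) mult_nonneg_nonneg)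
    show ?thesis using XX YY X0 b m2 Yp by (intro mult_mono mult_left_mono mult_nonneg_nonneg) auto
  qed
  ultimately have "a * (m^4 * X0) + m^4 * (r0^2 * H) + b * (m^2 * Y0) * (m^2 * X0) < a * X + (m*r0)^2 * H + b * Y * X"
    by linarith
  moreover have "a * (m^4 * X0) + m^4 * (r0^2 * H) + b * (m^2 * Y0) * (m^2 * X0) = m^4 * D r0 t0"
    unfolding Dq_def X0_def Y0_def by (simp add: algebra_simps power2_eq_square power4_eq_xxxx)
  ultimately show ?thesis unfolding Dq_def X_def Y_def by simp
qed

lemma side_le:
  assumes F0: "F r0 t0 \<le> 0" and F1: "F (l * r0) t = 0" and l: "1 < l"
    and r0: "0 < r0" and t0: "0 < t0" and t: "0 < t" "t \<le> l * t0"
  shows False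
proof -
  define r where "r = l * r0"
  have r: "0 < r" "r0 < r" unfolding r_def using l r0 by auto
  define X where "X = 2 * ln r * L + G"
  define X0 where "X0 = 2 * ln r0 * L + G"
  have XX0: "X0 < X" unfolding X_def X0_def using r r0 L by (auto intro!: mult_strict_right_mono)
  have e1: "D r t = r powr p * X" using F1 unfolding Phi_def X_def r_def by simp
  have e0: "D r0 t0 \<le> r0 powr p * X0" using F0 unfolding Phi_def X0_def by simp
  have "0 < D r t" by (rule D_pos[OF r(1) t(1)])
  hence Xp: "0 < X" using e1 r by (simp add: zero_less_mult_iff)
  have "D r t < l^4 * D r0 t0" unfolding r_def by (rule D_up[OF l r0 t0 t])
  also have "\<dots> \<le> l^4 * (r0 powr p * X0)" using e0 by (intro mult_left_mono) auto
  finally have "l powr p * r0 powr p * X < l^4 * (r0 powr p * X0)"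
    using e1 unfolding r_def using l r0 by (simp add: powr_mult)
  moreover have "l^4 \<le> l powr p"
  proof -
    have "l powr 4 \<le> l powr p" using l p by (intro powr_mono) auto
    thus ?thesis using l by simp
  qed
  ultimately have "l^4 * (r0 powr p * X) < l^4 * (r0 powr p * X0)"
    using Xp r0 by (smt (verit) mult.assoc mult.commute mult_right_mono powr_gt_zero)
  hence "X < X0" using l r0 by (simp add: mult_less_cancel_left_pos)
  thus False using XX0 by simp
qed

lemma side_ge:
  assumes F0: "F r0 t0 = 0" and F1: "F (m * r0) t = 0" and m: "0 < m" "m < 1"
    and r0: "0 < r0" and t0: "0 < t0" and t: "m * t0 \<le> t"
  shows False
proof -
  define r where "r = m * r0"
  have tp: "0 < t" using m t0 t by (smt (verit) mult_pos_pos)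
  have r: "0 < r" "r < r0" unfolding r_def using m r0 by auto
  define X where "X = 2 * ln r * L + G"
  define X0 where "X0 = 2 * ln r0 * L + G"
  have XX0: "X < X0" unfolding X_def X0_def using r r0 L by (auto intro!: mult_strict_right_mono)
  have e1: "D r t = r powr p * X" using F1 unfolding Phi_def X_def r_def by simp
  have e0: "D r0 t0 = r0 powr p * X0" using F0 unfolding Phi_def X0_def by simp
  have "0 < D r0 t0" by (rule D_pos[OF r0 t0])
  hence X0p: "0 < X0" using e0 r0 by (simp add: zero_less_mult_iff)
  have "m^4 * (r0 powr p * X0) < D r t" using D_down[OF m r0 t0 t] e0 unfolding r_def by simp
  hence A: "m^4 * (r0 powr p * X0) < m powr p * (r0 powr p * X)"
    using e1 unfolding r_def using m r0 by (simp add: powr_mult mult_ac)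
  have m4: "m powr p \<le> m^4"
  proof -
    have "m powr p \<le> m powr 4" using m p by (intro powr_mono') auto
    thus ?thesis using m by simp
  qed
  have "0 < m powr p * (r0 powr p * X)"
    using A X0p m r0 by (smt (verit) mult_pos_pos powr_gt_zero zero_less_power)
  hence Xp: "0 < X" using m r0 by (simp add: zero_less_mult_iff)
  have "m powr p * (r0 powr p * X) \<le> m^4 * (r0 powr p * X)"
    using m4 Xp r0 by (intro mult_right_mono) auto
  with A have "m^4 * (r0 powr p * X0) < m^4 * (r0 powr p * X)" by simp
  hence "X0 < X" using m r0 by (simp add: mult_less_cancel_left_pos)
  thus False using XX0 by simp
qed

end


context SC begin

lemma F_small:
  assumes d: "0 < d" "d \<le> 1" "d * \<bar>G\<bar> < H" and t: "0 \<le> t"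
  shows "0 < F d t"
proof -
  have D: "d^2 * H \<le> D d t"
    unfolding Dq_def using a b P N B t d by (auto intro!: add_nonneg_nonneg mult_nonneg_nonneg)
  have ln: "ln d \<le> 0" using d by simp
  have "d powr p * (2 * ln d * L + G) \<le> d powr p * G"
    using ln L by (intro mult_left_mono) (auto simp: mult_nonpos_nonneg)
  also have "\<dots> \<le> d powr p * \<bar>G\<bar>" by (intro mult_left_mono) auto
  finally have 1: "d powr p * (2 * ln d * L + G) \<le> d powr p * \<bar>G\<bar>" .
  have e: "d powr p = d powr 2 * d powr (p - 2)" by (simp add: powr_add[symmetric])
  have e2: "d powr 2 = d^2" using d by simp
  have "d powr (p - 2) \<le> d powr 1" using d p by (intro powr_mono') auto
  hence 2: "d powr (p - 2) \<le> d" using d by simp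
  have "d powr p * \<bar>G\<bar> = d^2 * d powr (p - 2) * \<bar>G\<bar>" using e e2 by simp
  also have "\<dots> \<le> d^2 * d * \<bar>G\<bar>" using 2
    by (intro mult_right_mono mult_left_mono) auto
  finally have "d powr p * (2 * ln d * L + G) \<le> d^2 * (d * \<bar>G\<bar>)" using 1 by (simp add: mult_ac)
  also have "\<dots> < d^2 * H" using d by (intro mult_strict_left_mono) auto
  finally show ?thesis using D unfolding Phi_def by simp
qed

definition "Q = a * (P + B) + H + b * (P + 2 * B + N) * (P + B)"

lemma Q_nonneg: "0 \<le> Q" unfolding Q_def using a b P N B H by auto

lemma F_large:
  assumes R: "1 \<le> R" and t: "0 < t" "t \<le> R"
    and lnR0: "a * (P + B) + H + b * (P + 2 * B + N) * (P + B) + \<bar>G\<bar> < 2 * ln R * L"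
  shows "F R t < 0"
proof -
  have lnR: "Q + \<bar>G\<bar> < 2 * ln R * L" using lnR0 unfolding Q_def .
  have R4: "R^2 \<le> R^4" using R by (intro power_increasing) auto
  have R2: "1 \<le> R^2" using R by simp
  have rt: "R * t * B \<le> R^2 * B" using t R B by (auto simp: power2_eq_square intro!: mult_right_mono mult_left_mono)
  have tt: "t^2 * N \<le> R^2 * N" using t N by (intro mult_right_mono power_mono) auto
  have X: "R^2 * P + R * t * B \<le> R^2 * (P + B)" using rt by (simp add: algebra_simps)
  have X0: "0 \<le> R^2 * P + R * t * B" using t R P B by auto
  have Y: "R^2 * P + 2 * R * t * B + t^2 * N \<le> R^2 * (P + 2 * B + N)" using rt tt by (simp add: algebra_simps)
  have Y0: "0 \<le> R^2 * P + 2 * R * t * B + t^2 * N" using t R P B N by auto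
  have "D R t \<le> a * (R^4 * (P + B)) + R^4 * H + b * (R^2 * (P + 2 * B + N)) * (R^2 * (P + B))"
  proof -
    have 1: "a * (R^2 * P + R * t * B) \<le> a * (R^4 * (P + B))"
      using X R4 a P B by (intro mult_left_mono order.trans[OF X] mult_right_mono) auto
    have 2: "R^2 * H \<le> R^4 * H" using R4 H by (intro mult_right_mono) auto
    have 3: "b * (R^2 * P + 2 * R * t * B + t^2 * N) * (R^2 * P + R * t * B) \<le> b * (R^2 * (P + 2 * B + N)) * (R^2 * (P + B))"
      using X Y X0 Y0 b P B N by (intro mult_mono mult_left_mono) auto
    show ?thesis unfolding Dq_def using 1 2 3 by linarith
  qed
  also have "\<dots> = R^4 * Q" unfolding Q_def by (simp add: algebra_simps power2_eq_square power4_eq_xxxx)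
  finally have D: "D R t \<le> R^4 * Q" .
  define X where "X = 2 * ln R * L + G"
  have XQ: "Q < X" unfolding X_def using lnR by linarith
  have Xp: "0 < X" using XQ Q_nonneg by linarith
  have "R^4 \<le> R powr p"
  proof -
    have "R powr 4 \<le> R powr p" using R p by (intro powr_mono) auto
    thus ?thesis using R by simp
  qed
  hence "R^4 * X \<le> R powr p * X" using Xp by (intro mult_right_mono) auto
  moreover have "R^4 * Q < R^4 * X" using XQ R by (intro mult_strict_left_mono) auto
  ultimately show ?thesis using D unfolding Phi_def X_def by linarith
qed

lemma F_cont:
  assumes "\<And>z. z \<in> S \<Longrightarrow> 0 < fst z"
  shows "continuous_on S (\<lambda>z. F (fst z) (snd z))"
proof -
  have nz: "\<forall>z\<in>S. fst z \<noteq> 0" using assms by (metis less_irrefl)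
  show ?thesis unfolding Phi_def Dq_def by (intro continuous_intros) (use nz in auto)
qed

lemma F_cont2:
  assumes "\<And>z. z \<in> S \<Longrightarrow> 0 < snd z"
  shows "continuous_on S (\<lambda>z. F (snd z) (fst z))"
proof -
  have nz: "\<forall>z\<in>S. snd z \<noteq> 0" using assms by (metis less_irrefl)
  show ?thesis unfolding Phi_def Dq_def by (intro continuous_intros) (use nz in auto)
qed

end

lemma sys_le:
  assumes S1: "SC a b p P N B Hp Lp" and S2: "SC a b p N P B Hm Lm"
    and A1: "Phi a b p P N B Hp Lp Gp r0 t0 \<le> 0" and A2: "Phi a b p N P B Hm Lm Gm t0 r0 \<le> 0"
    and E1: "Phi a b p P N B Hp Lp Gp r t = 0" and E2: "Phi a b p N P B Hm Lm Gm t r = 0"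
    and pos: "0 < r0" "0 < t0" "0 < r" "0 < t"
  shows "r \<le> r0 \<and> t \<le> t0"
proof (rule ccontr)
  assume nle: "\<not> (r \<le> r0 \<and> t \<le> t0)"
  consider "t / t0 \<le> r / r0" | "r / r0 < t / t0" by linarith
  thus False
  proof cases
    case 1
    define l where "l = r / r0"
    have rl: "r = l * r0" unfolding l_def using pos by simp
    have tl: "t \<le> l * t0" using 1 pos unfolding l_def by (simp add: field_simps)
    have l1: "1 < l"
    proof (rule ccontr)
      assume "\<not> 1 < l"
      hence "l \<le> 1" by simp
      hence "l * r0 \<le> r0" "l * t0 \<le> t0" using mult_right_mono[of l 1 r0] mult_right_mono[of l 1 t0] pos by auto
      hence "r \<le> r0" "t \<le> t0" using rl tl by auto
      thus False using nle by simp
    qed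
    show False
      by (rule SC.side_le[OF S1 A1 _ l1 pos(1,2) pos(4) tl]) (use E1 rl in simp)
  next
    case 2
    define l where "l = t / t0"
    have tl: "t = l * t0" unfolding l_def using pos by simp
    have rl: "r \<le> l * r0" using 2 pos unfolding l_def by (simp add: field_simps)
    have l1: "1 < l"
    proof (rule ccontr)
      assume "\<not> 1 < l"
      hence "l \<le> 1" by simp
      hence "l * r0 \<le> r0" "l * t0 \<le> t0" using mult_right_mono[of l 1 r0] mult_right_mono[of l 1 t0] pos by auto
      hence "r \<le> r0" "t \<le> t0" using rl tl by auto
      thus False using nle by simp
    qed
    show False
      by (rule SC.side_le[OF S2 A2 _ l1 pos(2,1) pos(3) rl]) (use E2 tl in simp)
  qed
qed

lemma sys_ge:
  assumes S1: "SC a b p P N B Hp Lp" and S2: "SC a b p N P B Hm Lm"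
    and A1: "Phi a b p P N B Hp Lp Gp r0 t0 = 0" and A2: "Phi a b p N P B Hm Lm Gm t0 r0 = 0"
    and E1: "Phi a b p P N B Hp Lp Gp r t = 0" and E2: "Phi a b p N P B Hm Lm Gm t r = 0"
    and pos: "0 < r0" "0 < t0" "0 < r" "0 < t"
  shows "r0 \<le> r \<and> t0 \<le> t"
proof (rule ccontr)
  assume nle: "\<not> (r0 \<le> r \<and> t0 \<le> t)"
  consider "r / r0 \<le> t / t0" | "t / t0 < r / r0" by linarith
  thus False
  proof cases
    case 1
    define m where "m = r / r0"
    have rm: "r = m * r0" unfolding m_def using pos by simp
    have tm: "m * t0 \<le> t" using 1 pos unfolding m_def by (simp add: field_simps)
    have m0: "0 < m" unfolding m_def using pos by simp
    have m1: "m < 1"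
    proof (rule ccontr)
      assume "\<not> m < 1"
      hence "1 \<le> m" by simp
      hence "r0 \<le> m * r0" "t0 \<le> m * t0" using mult_right_mono[of 1 m r0] mult_right_mono[of 1 m t0] pos by auto
      hence "r0 \<le> r" "t0 \<le> t" using rm tm by auto
      thus False using nle by simp
    qed
    show False
      by (rule SC.side_ge[OF S1 A1 _ m0 m1 pos(1,2) tm]) (use E1 rm in simp)
  next
    case 2
    define m where "m = t / t0"
    have tm: "t = m * t0" unfolding m_def using pos by simp
    have rm: "m * r0 \<le> r" using 2 pos unfolding m_def by (simp add: field_simps)
    have m0: "0 < m" unfolding m_def using pos by simp
    have m1: "m < 1"
    proof (rule ccontr)
      assume "\<not> m < 1"
      hence "1 \<le> m" by simp
      hence "r0 \<le> m * r0" "t0 \<le> m * t0" using mult_right_mono[of 1 m r0] mult_right_mono[of 1 m t0] pos by auto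
      hence "r0 \<le> r" "t0 \<le> t" using rm tm by auto
      thus False using nle by simp
    qed
    show False
      by (rule SC.side_ge[OF S2 A2 _ m0 m1 pos(2,1) rm]) (use E2 tm in simp)
  qed
qed


lemma clamp_fix:
  fixes d R r y :: real
  assumes "d \<le> r" "r \<le> R" "max d (min R (r + y)) = r" "r = d \<Longrightarrow> 0 < y" "r = R \<Longrightarrow> y < 0"
  shows "y = 0"
  using assms by (auto simp: max_def min_def split: if_splits)

lemma sys_exists:
  assumes S1: "SC a b p P N B Hp Lp" and S2: "SC a b p N P B Hm Lm"
  shows "\<exists>r t. 0 < r \<and> 0 < t \<and> Phi a b p P N B Hp Lp Gp r t = 0 \<and> Phi a b p N P B Hm Lm Gm t r = 0"
proof -
  have a: "0 < a" and b: "0 < b" and P: "0 \<le> P" and N: "0 \<le> N" and B: "0 \<le> B"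
    and Hp: "0 < Hp" and Lp: "0 < Lp" and Hm: "0 < Hm" and Lm: "0 < Lm"
    using S1 S2 unfolding SC_def by auto
  define F1 where "F1 = (\<lambda>r t. Phi a b p P N B Hp Lp Gp r t)"
  define F2 where "F2 = (\<lambda>r t. Phi a b p N P B Hm Lm Gm t r)"
  define d where "d = min (1/2) (min (Hp / (2 * (\<bar>Gp\<bar> + 1))) (Hm / (2 * (\<bar>Gm\<bar> + 1))))"
  have d0: "0 < d" unfolding d_def using Hp Hm by auto
  have d1: "d \<le> 1" unfolding d_def by auto
  have dG: "d * \<bar>G\<bar> < H" if "d \<le> H / (2 * (\<bar>G\<bar> + 1))" "0 < H" for G H
  proof -
    have "d * \<bar>G\<bar> \<le> H / (2 * (\<bar>G\<bar> + 1)) * \<bar>G\<bar>" using that by (intro mult_right_mono) auto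
    also have "\<dots> = H * (\<bar>G\<bar> / (2 * (\<bar>G\<bar> + 1)))" by simp
    also have "\<dots> < H * 1" using that(2) by (intro mult_strict_left_mono) auto
    finally show ?thesis by simp
  qed
  have dGp: "d * \<bar>Gp\<bar> < Hp" by (rule dG) (use Hp in \<open>auto simp: d_def\<close>)
  have dGm: "d * \<bar>Gm\<bar> < Hm" by (rule dG) (use Hm in \<open>auto simp: d_def\<close>)
  define Q1 where "Q1 = a * (P + B) + Hp + b * (P + 2 * B + N) * (P + B)"
  define Q2 where "Q2 = a * (N + B) + Hm + b * (N + 2 * B + P) * (N + B)"
  have Q1: "0 \<le> Q1" unfolding Q1_def using a b P N B Hp by auto
  have Q2: "0 \<le> Q2" unfolding Q2_def using a b P N B Hm by auto
  define e where "e = (Q1 + \<bar>Gp\<bar>) / (2 * Lp) + (Q2 + \<bar>Gm\<bar>) / (2 * Lm) + 1"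
  have e1: "(Q1 + \<bar>Gp\<bar>) / (2 * Lp) < e" "(Q2 + \<bar>Gm\<bar>) / (2 * Lm) < e"
  proof -
    have "0 \<le> (Q1 + \<bar>Gp\<bar>) / (2 * Lp)" "0 \<le> (Q2 + \<bar>Gm\<bar>) / (2 * Lm)"
      using Q1 Q2 Lp Lm by (auto intro!: divide_nonneg_pos)
    thus "(Q1 + \<bar>Gp\<bar>) / (2 * Lp) < e" "(Q2 + \<bar>Gm\<bar>) / (2 * Lm) < e" unfolding e_def by auto
  qed
  have e0: "0 \<le> e" using e1 Q1 Lp by (smt (verit) divide_nonneg_pos)
  define R where "R = exp e"
  have R1: "1 \<le> R" unfolding R_def using e0 by simp
  have lnR: "ln R = e" unfolding R_def by simp
  have dR: "d \<le> R" using d1 R1 by simp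
  have L1: "Q1 + \<bar>Gp\<bar> < 2 * ln R * Lp" using e1(1) Lp unfolding lnR by (simp add: field_simps)
  have L2: "Q2 + \<bar>Gm\<bar> < 2 * ln R * Lm" using e1(2) Lm unfolding lnR by (simp add: field_simps)
  define S where "S = {d..R} \<times> {d..R}"
  define g where "g = (\<lambda>z::real\<times>real. (max d (min R (fst z + F1 (fst z) (snd z))),
                                         max d (min R (snd z + F2 (fst z) (snd z)))))"
  have Spos: "z \<in> S \<Longrightarrow> 0 < fst z \<and> 0 < snd z" for z unfolding S_def using d0 by auto
  have c1: "continuous_on S (\<lambda>z. F1 (fst z) (snd z))"
    unfolding F1_def by (rule SC.F_cont[OF S1]) (use Spos in auto)
  have c2: "continuous_on S (\<lambda>z. F2 (fst z) (snd z))"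
    unfolding F2_def by (rule SC.F_cont2[OF S2]) (use Spos in auto)
  have cg: "continuous_on S g" unfolding g_def
    by (intro continuous_intros c1 c2)
  have gS: "g \<in> S \<rightarrow> S" unfolding g_def S_def using dR by auto
  have "compact S" unfolding S_def by (intro compact_Times compact_Icc)
  moreover have "convex S" unfolding S_def by (intro convex_Times convex_real_interval)
  moreover have "S \<noteq> {}" unfolding S_def using dR by auto
  ultimately obtain z where z: "z \<in> S" "g z = z" using brouwer[OF _ _ _ cg gS] by blast
  obtain r t where zrt: "z = (r, t)" by (cases z)
  have rt: "d \<le> r" "r \<le> R" "d \<le> t" "t \<le> R" using z(1) unfolding zrt S_def by auto
  have fix1: "max d (min R (r + F1 r t)) = r" and fix2: "max d (min R (t + F2 r t)) = t"
    using z(2) unfolding zrt g_def by auto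
  have "F1 r t = 0"
  proof (rule clamp_fix[OF rt(1,2) fix1])
    assume "r = d" thus "0 < F1 r t" unfolding F1_def
      using SC.F_small[OF S1 d0 d1 dGp, of t] rt d0 by simp
  next
    assume "r = R" thus "F1 r t < 0" unfolding F1_def
      using SC.F_large[OF S1 R1 _ rt(4), of Gp] rt d0 L1 unfolding Q1_def by simp
  qed
  moreover have "F2 r t = 0"
  proof (rule clamp_fix[OF rt(3,4) fix2])
    assume "t = d" thus "0 < F2 r t" unfolding F2_def
      using SC.F_small[OF S2 d0 d1 dGm, of r] rt d0 by simp
  next
    assume "t = R" thus "F2 r t < 0" unfolding F2_def
      using SC.F_large[OF S2 R1 _ rt(2), of Gm] rt d0 L2 unfolding Q2_def by simp
  qed
  ultimately show ?thesis using rt d0 unfolding F1_def F2_def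
    by (intro exI[of _ r] exI[of _ t]) auto
qed


lemma posneg_prod_nonneg:
  fixes a c :: real
  shows "0 \<le> (max a 0 - max c 0) * (min a 0 - min c 0)"
  by (cases "0 \<le> a"; cases "0 \<le> c") (auto simp: max_def min_def mult_nonneg_nonneg mult_nonpos_nonpos
      mult_nonneg_nonpos mult_nonpos_nonneg)

theorem mainTheorem15:
  fixes s a b p :: real
    and w :: "('d::finite \<Rightarrow> int) \<Rightarrow> ('d \<Rightarrow> int) \<Rightarrow> real"
    and h :: "('d \<Rightarrow> int) \<Rightarrow> real"
    and u :: "('d \<Rightarrow> int) \<Rightarrow> real"
  assumes s: "0 < s" "s < 1"
    and w: "admissible_weight s w"
    and ab: "0 < a" "0 < b"
    and p: "6 < p"
    and h1: "\<exists>h0>0. \<forall>x. h0 \<le> h x"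
    and uH: "u \<in> H_space w h"
    and upos: "pos_part u \<noteq> (\<lambda>_. 0)"
    and uneg: "neg_part u \<noteq> (\<lambda>_. 0)"
    and Jpos: "Jder a b p w h u (pos_part u) \<le> 0"
    and Jneg: "Jder a b p w h u (neg_part u) \<le> 0"
  shows "(\<exists>!rt::real \<times> real. 0 < fst rt \<and> 0 < snd rt \<and>
            (\<lambda>x. fst rt * pos_part u x + snd rt * neg_part u x) \<in> M_set a b p w h) \<and>
         (\<forall>r t. 0 < r \<and> 0 < t \<and>
            (\<lambda>x. r * pos_part u x + t * neg_part u x) \<in> M_set a b p w h
            \<longrightarrow> r \<le> 1 \<and> t \<le> 1)"
proof -
  obtain M C where MC: "0 \<le> M" "0 \<le> C"
    "\<forall>x y. x \<noteq> y \<longrightarrow> 0 < w x y \<and> w x y = w y x \<and> w x y \<le> C"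
    "\<forall>x. (\<lambda>y. w x y) summable_on (UNIV - {x}) \<and> infsum (\<lambda>y. w x y) (UNIV - {x}) \<le> M"
    using weight_est[OF w s(1)] by blast
  interpret WG w M C by unfold_locales (use MC in auto)
  obtain h0 where h0: "0 < h0" "\<And>x. h0 \<le> h x" using h1 by blast
  have hpos: "0 < h x" for x using h0 by (smt (verit))
  have hnn: "0 \<le> h x" for x using hpos[of x] by simp
  define f where "f = pos_part u"
  define g where "g = neg_part u"
  have fx: "f x = max (u x) 0" and gx: "g x = min (u x) 0" for x
    unfolding f_def g_def pos_part_def neg_part_def by auto
  have u2: "(\<lambda>x. (u x)\<^sup>2) summable_on UNIV" and hu: "(\<lambda>x. h x * (u x)\<^sup>2) summable_on UNIV"
    using uH unfolding H_space_def W_space_def by auto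
  have fu: "(f x)\<^sup>2 \<le> (u x)\<^sup>2" and gu: "(g x)\<^sup>2 \<le> (u x)\<^sup>2" for x
    unfolding fx gx by (auto simp: max_def min_def)
  have lf: "l2 f" unfolding l2_def by (rule summable_on_comparison_test[OF u2]) (use fu in auto)
  have lg: "l2 g" unfolding l2_def by (rule summable_on_comparison_test[OF u2]) (use gu in auto)
  have fg: "f x * g x = 0" for x unfolding fx gx by (auto simp: max_def min_def)
  have gf: "g x * f x = 0" for x using fg[of x] by (simp add: mult.commute)
  have hf: "(\<lambda>x. h x * (f x)\<^sup>2) summable_on UNIV"
  proof (rule summable_on_comparison_test[OF hu])
    fix x
    show "h x * (f x)\<^sup>2 \<le> h x * (u x)\<^sup>2" using fu[of x] hpos[of x] by (intro mult_left_mono) auto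
    show "0 \<le> h x * (f x)\<^sup>2" using hpos[of x] by simp
  qed
  have hg: "(\<lambda>x. h x * (g x)\<^sup>2) summable_on UNIV"
  proof (rule summable_on_comparison_test[OF hu])
    fix x
    show "h x * (g x)\<^sup>2 \<le> h x * (u x)\<^sup>2" using gu[of x] hpos[of x] by (intro mult_left_mono) auto
    show "0 \<le> h x * (g x)\<^sup>2" using hpos[of x] by simp
  qed
  have p3: "3 \<le> p" using p by simp
  define Pq where "Pq = grad_norm_sq w f"
  define Nq where "Nq = grad_norm_sq w g"
  define Bq where "Bq = infsum (\<lambda>x. grad_prod w f g x) UNIV"
  define Hp where "Hp = infsum (\<lambda>x. h x * (f x)\<^sup>2) UNIV"
  define Hm where "Hm = infsum (\<lambda>x. h x * (g x)\<^sup>2) UNIV"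
  define Lp where "Lp = infsum (\<lambda>x. \<bar>f x\<bar> powr p) UNIV"
  define Lm where "Lm = infsum (\<lambda>x. \<bar>g x\<bar> powr p) UNIV"
  define Gp where "Gp = infsum (\<lambda>x. \<bar>f x\<bar> powr p * ln ((f x)^2)) UNIV"
  define Gm where "Gm = infsum (\<lambda>x. \<bar>g x\<bar> powr p * ln ((g x)^2)) UNIV"
  define F1 where "F1 = (\<lambda>r t. Phi a b p Pq Nq Bq Hp Lp Gp r t)"
  define F2 where "F2 = (\<lambda>r t. Phi a b p Nq Pq Bq Hm Lm Gm t r)"
  have Bsym: "infsum (\<lambda>x. grad_prod w g f x) UNIV = Bq"
    unfolding Bq_def by (rule infsum_cong) (rule gp_sym)
  have form1: "Jder a b p w h (\<lambda>x. r * f x + t * g x) (\<lambda>x. r * f x) = F1 r t" if r: "0 < r" for r t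
  proof -
    have lr: "ln (r^2) = 2 * ln r" using r by (simp add: ln_realpow)
    have rne: "r \<noteq> 0" using r by simp
    show ?thesis
      unfolding jder_formula[OF lf lg fg hf rne p3] using r
      unfolding F1_def Phi_def Dq_def Pq_def Nq_def Bq_def Hp_def Lp_def Gp_def lr
      by (simp add: algebra_simps)
  qed
  have form2: "Jder a b p w h (\<lambda>x. r * f x + t * g x) (\<lambda>x. t * g x) = F2 r t" if t: "0 < t" for r t
  proof -
    have lt: "ln (t^2) = 2 * ln t" using t by (simp add: ln_realpow)
    have e: "(\<lambda>x. r * f x + t * g x) = (\<lambda>x. t * g x + r * f x)" by (auto simp: add.commute)
    have tne: "t \<noteq> 0" using t by simp
    show ?thesis
      unfolding e jder_formula[OF lg lf gf hg tne p3] Bsym using t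
      unfolding F2_def Phi_def Dq_def Pq_def Nq_def Bq_def Hm_def Lm_def Gm_def lt
      by (simp add: algebra_simps)
  qed
  have fne: "f \<noteq> (\<lambda>_. 0)" using upos unfolding f_def .
  have gne: "g \<noteq> (\<lambda>_. 0)" using uneg unfolding g_def .
  have charM: "(\<lambda>x. r * f x + t * g x) \<in> M_set a b p w h \<longleftrightarrow> F1 r t = 0 \<and> F2 r t = 0"
    if r: "0 < r" and t: "0 < t" for r t
  proof -
    define v where "v = (\<lambda>x. r * f x + t * g x)"
    have pv: "pos_part v = (\<lambda>x. r * f x)"
    proof
      fix x show "pos_part v x = r * f x"
        unfolding v_def pos_part_def fx gx using r t
        by (cases "0 \<le> u x") (auto simp: max_def min_def zero_le_mult_iff mult_le_0_iff)
    qed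
    have nv: "neg_part v = (\<lambda>x. t * g x)"
    proof
      fix x show "neg_part v x = t * g x"
        unfolding v_def neg_part_def fx gx using r t
        by (cases "0 \<le> u x") (auto simp: max_def min_def zero_le_mult_iff mult_le_0_iff)
    qed
    have hv: "(\<lambda>x. h x * (v x)\<^sup>2) summable_on UNIV"
    proof -
      have "h x * (v x)\<^sup>2 = r^2 * (h x * (f x)\<^sup>2) + t^2 * (h x * (g x)\<^sup>2)" for x
      proof -
        have "(v x)\<^sup>2 = r^2 * (f x)\<^sup>2 + t^2 * (g x)\<^sup>2 + 2 * r * t * (f x * g x)"
          unfolding v_def by (simp add: power2_eq_square algebra_simps)
        thus ?thesis using fg[of x] by (simp add: algebra_simps)
      qed
      moreover have "(\<lambda>x. r^2 * (h x * (f x)\<^sup>2) + t^2 * (h x * (g x)\<^sup>2)) summable_on UNIV"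
        by (intro summable_on_add summable_on_cmult_right hf hg)
      ultimately show ?thesis by simp
    qed
    have vH: "v \<in> H_space w h" unfolding v_def by (rule l2_H[OF l2_add[OF lf lg] hv[unfolded v_def]])
    have pne: "pos_part v \<noteq> (\<lambda>_. 0)"
    proof
      assume "pos_part v = (\<lambda>_. 0)"
      hence "\<forall>x. r * f x = 0" unfolding pv by meson
      hence "f = (\<lambda>_. 0)" using r by auto
      thus False using fne by simp
    qed
    have nne: "neg_part v \<noteq> (\<lambda>_. 0)"
    proof
      assume "neg_part v = (\<lambda>_. 0)"
      hence "\<forall>x. t * g x = 0" unfolding nv by meson
      hence "g = (\<lambda>_. 0)" using t by auto
      thus False using gne by simp
    qed
    have "v \<in> M_set a b p w h \<longleftrightarrow> Jder a b p w h v (pos_part v) = 0 \<and> Jder a b p w h v (neg_part v) = 0"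
      unfolding M_set_def using vH pne nne by auto
    also have "\<dots> \<longleftrightarrow> F1 r t = 0 \<and> F2 r t = 0"
      unfolding pv nv unfolding v_def form1[OF r] form2[OF t] ..
    finally show ?thesis unfolding v_def .
  qed
  have Pq0: "0 \<le> Pq" unfolding Pq_def grad_norm_sq_def by (intro infsum_nonneg gp_nonneg)
  have Nq0: "0 \<le> Nq" unfolding Nq_def grad_norm_sq_def by (intro infsum_nonneg gp_nonneg)
  have ptB: "0 \<le> w x y * (f x - f y) * (g x - g y)" if "y \<in> UNIV - {x}" for x y
  proof -
    have xy: "x \<noteq> y" using that by auto
    have "0 \<le> (f x - f y) * (g x - g y)" unfolding fx gx by (rule posneg_prod_nonneg)
    thus "0 \<le> w x y * (f x - f y) * (g x - g y)" using w0[OF xy] by (simp add: mult.assoc)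
  qed
  have Bq0: "0 \<le> Bq" unfolding Bq_def grad_prod_def
    by (rule infsum_nonneg, rule mult_nonneg_nonneg, simp, rule infsum_nonneg, rule ptB)
  obtain x1 where x1: "f x1 \<noteq> 0" using fne by auto
  obtain x2 where x2: "g x2 \<noteq> 0" using gne by auto
  have Lfs: "(\<lambda>x. \<bar>f x\<bar> powr p) summable_on UNIV" using l2_powr_summable[OF lf p3] by simp
  have Lgs: "(\<lambda>x. \<bar>g x\<bar> powr p) summable_on UNIV" using l2_powr_summable[OF lg p3] by simp
  have Hp0: "0 < Hp"
  proof -
    have "sum (\<lambda>x. h x * (f x)\<^sup>2) {x1} \<le> Hp" unfolding Hp_def
      by (rule finite_sum_le_infsum[OF hf]) (auto intro!: mult_nonneg_nonneg hnn)
    moreover have "0 < h x1 * (f x1)\<^sup>2" using x1 hpos by simp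
    ultimately show ?thesis by simp
  qed
  have Hm0: "0 < Hm"
  proof -
    have "sum (\<lambda>x. h x * (g x)\<^sup>2) {x2} \<le> Hm" unfolding Hm_def
      by (rule finite_sum_le_infsum[OF hg]) (auto intro!: mult_nonneg_nonneg hnn)
    moreover have "0 < h x2 * (g x2)\<^sup>2" using x2 hpos by simp
    ultimately show ?thesis by simp
  qed
  have Lp0: "0 < Lp"
  proof -
    have "sum (\<lambda>x. \<bar>f x\<bar> powr p) {x1} \<le> Lp" unfolding Lp_def
      by (rule finite_sum_le_infsum[OF Lfs]) auto
    moreover have "0 < \<bar>f x1\<bar> powr p" using x1 by simp
    ultimately show ?thesis by (metis sum.insert_if finite.emptyI empty_iff sum.empty add.right_neutral less_le_trans)
  qed
  have Lm0: "0 < Lm"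
  proof -
    have "sum (\<lambda>x. \<bar>g x\<bar> powr p) {x2} \<le> Lm" unfolding Lm_def
      by (rule finite_sum_le_infsum[OF Lgs]) auto
    moreover have "0 < \<bar>g x2\<bar> powr p" using x2 by simp
    ultimately show ?thesis by (metis sum.insert_if finite.emptyI empty_iff sum.empty add.right_neutral less_le_trans)
  qed
  have S1: "SC a b p Pq Nq Bq Hp Lp" unfolding SC_def using ab Pq0 Nq0 Bq0 Hp0 Lp0 p by auto
  have S2: "SC a b p Nq Pq Bq Hm Lm" unfolding SC_def using ab Pq0 Nq0 Bq0 Hm0 Lm0 p by auto
  have ue: "u = (\<lambda>x. 1 * f x + 1 * g x)" unfolding fx gx by (auto simp: max_def min_def)
  have F11: "F1 1 1 \<le> 0"
    using Jpos form1[of 1 1] unfolding f_def[symmetric] by (subst (asm) (1) ue) simp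
  have F21: "F2 1 1 \<le> 0"
    using Jneg form2[of 1 1] unfolding g_def[symmetric] by (subst (asm) (1) ue) simp
  have main_eq: "(\<lambda>x. r * pos_part u x + t * neg_part u x) = (\<lambda>x. r * f x + t * g x)" for r t
    unfolding f_def g_def ..
  obtain r0 t0 where rt0: "0 < r0" "0 < t0" "F1 r0 t0 = 0" "F2 r0 t0 = 0"
    using sys_exists[OF S1 S2, of Gp Gm] unfolding F1_def F2_def by blast
  have uniq: "r = r0 \<and> t = t0" if "0 < r" "0 < t" "F1 r t = 0" "F2 r t = 0" for r t
  proof -
    have "r \<le> r0 \<and> t \<le> t0"
      by (rule sys_le[OF S1 S2]) (use rt0 that in \<open>auto simp: F1_def F2_def\<close>)
    moreover have "r0 \<le> r \<and> t0 \<le> t"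
      by (rule sys_ge[OF S1 S2]) (use rt0 that in \<open>auto simp: F1_def F2_def\<close>)
    ultimately show ?thesis by auto
  qed
  have part1: "\<exists>!rt::real \<times> real. 0 < fst rt \<and> 0 < snd rt \<and>
            (\<lambda>x. fst rt * pos_part u x + snd rt * neg_part u x) \<in> M_set a b p w h"
  proof (rule ex1I[of _ "(r0, t0)"])
    show "0 < fst (r0, t0) \<and> 0 < snd (r0, t0) \<and>
        (\<lambda>x. fst (r0, t0) * pos_part u x + snd (r0, t0) * neg_part u x) \<in> M_set a b p w h"
      unfolding main_eq using charM[of r0 t0] rt0 by simp
  next
    fix rt :: "real \<times> real"
    assume "0 < fst rt \<and> 0 < snd rt \<and> (\<lambda>x. fst rt * pos_part u x + snd rt * neg_part u x) \<in> M_set a b p w h"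
    hence "0 < fst rt" "0 < snd rt" "F1 (fst rt) (snd rt) = 0" "F2 (fst rt) (snd rt) = 0"
      unfolding main_eq using charM[of "fst rt" "snd rt"] by auto
    thus "rt = (r0, t0)" using uniq by (cases rt) auto
  qed
  have part2: "\<forall>r t. 0 < r \<and> 0 < t \<and>
            (\<lambda>x. r * pos_part u x + t * neg_part u x) \<in> M_set a b p w h \<longrightarrow> r \<le> 1 \<and> t \<le> 1"
  proof (intro allI impI)
    fix r t :: real
    assume "0 < r \<and> 0 < t \<and> (\<lambda>x. r * pos_part u x + t * neg_part u x) \<in> M_set a b p w h"
    hence rt: "0 < r" "0 < t" "F1 r t = 0" "F2 r t = 0"
      unfolding main_eq using charM[of r t] by auto
    show "r \<le> 1 \<and> t \<le> 1"
      by (rule sys_le[OF S1 S2, of Gp 1 1 Gm]) (use rt F11 F21 in \<open>auto simp: F1_def F2_def\<close>)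
  qed
  show ?thesis using part1 part2 by blast
qed


end
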